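(* Let $\mathcal A$ be a perfect algebra over a field $k$ and $S$ a commutative, associative, unital $k$-algebra, and assume the map $\psi:C(\mathcal A)\otimes S\to C(\mathcal A\otimes S)$, $\gamma\otimes s\mapsto \gamma\otimes L_s$, is an isomorphism. Then, as vector spaces, $$\mathcal D_{\mathcal A\otimes 1}(\mathcal A\otimes S)\cong \mathcal D\big(\mathbf 1\otimes S,\,C(\mathcal A)\otimes S\big).$$
   Context: An algebra over $k$ is a $k$-vector space with a bilinear product (not necessarily associative); $\mathcal A$ is perfect if $\mathcal A\mathcal A=\mathcal A$. The centroid $C(\mathcal A)=\{\gamma\in\operatorname{End}_k(\mathcal A)\mid \gamma(xy)=\gamma(x)y=x\gamma(y)\ \forall x,y\}$; for perfect $\mathcal A$ it is commutative, so $C(\mathcal A)\otimes S$ is a commutative associative unital algebra, containing $\mathbf 1\otimes S$ as a subalgebra ($\mathbf 1$ the identity of $\mathcal A$). $L_s$ is left multiplication by $s$ on $S$. For a subalgebra $\mathcal B$ of an algebra $\mathcal C$, $\mathcal D(\mathcal B,\mathcal C)$ is the space of $k$-linear maps $\delta:\mathcal B\to\mathcal C$ with $\delta(bb')=\delta(b)b'+b\delta(b')$. $\mathcal D_{\mathcal A\otimes 1}(\mathcal A\otimes S)$ is the set of derivations $\delta$ of $\mathcal A\otimes S$ with $\delta(\mathcal A\otimes 1)=0$. *)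

theory Defs
  imports Complex_Main "HOL-Library.FuncSet"
begin

text \<open>The tensor product of k-subspaces U and V (with given addition and scalar
multiplication) is the free k-vector space on U x V (finitely supported functions
U x V to k) modulo the subspace generated by the bilinearity relations.
Its elements are the cosets (sets of free vectors).\<close>

definition ind :: "'p \<Rightarrow> 'p \<Rightarrow> 'k::zero_neq_one" where
  "ind q p = (if p = q then 1 else 0)"

definition lincombs :: "('p \<Rightarrow> 'k::comm_ring_1) set \<Rightarrow> ('p \<Rightarrow> 'k) set" where
  "lincombs G = {(\<lambda>p. \<Sum>g\<in>t. r g * g p) | t r. finite t \<and> t \<subseteq> G}"

definition free_on :: "'u set \<Rightarrow> 'v set \<Rightarrow> ('u \<times> 'v \<Rightarrow> 'k::zero) set" where
  "free_on U V = {f. finite {p. f p \<noteq> 0} \<and> {p. f p \<noteq> 0} \<subseteq> U \<times> V}"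

definition tensor_rels ::
  "('u \<Rightarrow> 'u \<Rightarrow> 'u) \<Rightarrow> ('k::field \<Rightarrow> 'u \<Rightarrow> 'u) \<Rightarrow> 'u set \<Rightarrow>
   ('v \<Rightarrow> 'v \<Rightarrow> 'v) \<Rightarrow> ('k \<Rightarrow> 'v \<Rightarrow> 'v) \<Rightarrow> 'v set \<Rightarrow> ('u \<times> 'v \<Rightarrow> 'k) set" where
  "tensor_rels addU scU U addV scV V = lincombs (
     {(\<lambda>p. ind (addU u u', v) p - ind (u, v) p - ind (u', v) p) | u u' v. u \<in> U \<and> u' \<in> U \<and> v \<in> V}
   \<union> {(\<lambda>p. ind (u, addV v v') p - ind (u, v) p - ind (u, v') p) | u v v'. u \<in> U \<and> v \<in> V \<and> v' \<in> V}
   \<union> {(\<lambda>p. ind (scU c u, v) p - c * ind (u, v) p) | c u v. u \<in> U \<and> v \<in> V}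
   \<union> {(\<lambda>p. ind (u, scV c v) p - c * ind (u, v) p) | c u v. u \<in> U \<and> v \<in> V})"

definition tcls :: "('p \<Rightarrow> 'k::ab_group_add) set \<Rightarrow> ('p \<Rightarrow> 'k) \<Rightarrow> ('p \<Rightarrow> 'k) set" where
  "tcls R f = {g. (\<lambda>p. g p - f p) \<in> R}"

definition tcarrier :: "('u \<times> 'v \<Rightarrow> 'k::ab_group_add) set \<Rightarrow> 'u set \<Rightarrow> 'v set \<Rightarrow> ('u \<times> 'v \<Rightarrow> 'k) set set" where
  "tcarrier R U V = tcls R ` free_on U V"

definition rep :: "'x set \<Rightarrow> 'x" where
  "rep X = (SOME f. f \<in> X)"

definition tadd :: "('p \<Rightarrow> 'k::ab_group_add) set \<Rightarrow> ('p \<Rightarrow> 'k) set \<Rightarrow> ('p \<Rightarrow> 'k) set \<Rightarrow> ('p \<Rightarrow> 'k) set" where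
  "tadd R X Y = tcls R (\<lambda>p. rep X p + rep Y p)"

definition tscale :: "('p \<Rightarrow> 'k::comm_ring) set \<Rightarrow> 'k \<Rightarrow> ('p \<Rightarrow> 'k) set \<Rightarrow> ('p \<Rightarrow> 'k) set" where
  "tscale R c X = tcls R (\<lambda>p. c * rep X p)"

definition tzero :: "('p \<Rightarrow> 'k::ab_group_add) set \<Rightarrow> ('p \<Rightarrow> 'k) set" where
  "tzero R = tcls R (\<lambda>_. 0)"

definition tmk :: "('u \<times> 'v \<Rightarrow> 'k::{ab_group_add,zero_neq_one}) set \<Rightarrow> 'u \<Rightarrow> 'v \<Rightarrow> ('u \<times> 'v \<Rightarrow> 'k) set" where
  "tmk R u v = tcls R (ind (u, v))"

definition fmul2 :: "('p \<Rightarrow> 'q \<Rightarrow> 'r) \<Rightarrow> ('p \<Rightarrow> 'k::comm_ring) \<Rightarrow> ('q \<Rightarrow> 'k) \<Rightarrow> ('r \<Rightarrow> 'k)" where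
  "fmul2 m f g = (\<lambda>r. \<Sum>p\<in>{p. f p \<noteq> 0}. \<Sum>q\<in>{q. g q \<noteq> 0}. if m p q = r then f p * g q else 0)"

definition lin_on :: "'v set \<Rightarrow> ('v \<Rightarrow> 'v \<Rightarrow> 'v) \<Rightarrow> ('k \<Rightarrow> 'v \<Rightarrow> 'v) \<Rightarrow>
    'w set \<Rightarrow> ('w \<Rightarrow> 'w \<Rightarrow> 'w) \<Rightarrow> ('k \<Rightarrow> 'w \<Rightarrow> 'w) \<Rightarrow> ('v \<Rightarrow> 'w) \<Rightarrow> bool" where
  "lin_on V addV scV W addW scW f \<longleftrightarrow>
     (\<forall>x\<in>V. f x \<in> W) \<and> (\<forall>x\<in>V. \<forall>y\<in>V. f (addV x y) = addW (f x) (f y)) \<and>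
     (\<forall>c. \<forall>x\<in>V. f (scV c x) = scW c (f x))"

text \<open>D(B, C): k-linear maps from the subalgebra B to the algebra C (both with C's operations)
  satisfying the Leibniz rule; maps are taken extensional (undefined outside B).\<close>
definition derivs :: "'c set \<Rightarrow> 'c set \<Rightarrow> ('c \<Rightarrow> 'c \<Rightarrow> 'c) \<Rightarrow> ('k \<Rightarrow> 'c \<Rightarrow> 'c) \<Rightarrow>
    ('c \<Rightarrow> 'c \<Rightarrow> 'c) \<Rightarrow> ('c \<Rightarrow> 'c) set" where
  "derivs B C add sc mul = {d \<in> extensional B. lin_on B add sc C add sc d \<and>
     (\<forall>b\<in>B. \<forall>b'\<in>B. d (mul b b') = add (mul (d b) b') (mul b (d b')))}"

definition centroid_on :: "'c set \<Rightarrow> ('c \<Rightarrow> 'c \<Rightarrow> 'c) \<Rightarrow> ('k \<Rightarrow> 'c \<Rightarrow> 'c) \<Rightarrow>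
    ('c \<Rightarrow> 'c \<Rightarrow> 'c) \<Rightarrow> ('c \<Rightarrow> 'c) set" where
  "centroid_on C add sc mul = {g \<in> extensional C. lin_on C add sc C add sc g \<and>
     (\<forall>x\<in>C. \<forall>y\<in>C. g (mul x y) = mul (g x) y \<and> g (mul x y) = mul x (g y))}"

definition fun_space_iso :: "(('b \<Rightarrow> 'c) \<Rightarrow> ('d \<Rightarrow> 'e)) \<Rightarrow> ('b \<Rightarrow> 'c) set \<Rightarrow> 'b set \<Rightarrow>
    ('c \<Rightarrow> 'c \<Rightarrow> 'c) \<Rightarrow> ('k \<Rightarrow> 'c \<Rightarrow> 'c) \<Rightarrow> ('d \<Rightarrow> 'e) set \<Rightarrow> 'd set \<Rightarrow>
    ('e \<Rightarrow> 'e \<Rightarrow> 'e) \<Rightarrow> ('k \<Rightarrow> 'e \<Rightarrow> 'e) \<Rightarrow> bool" where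
  "fun_space_iso F D1 B1 add1 sc1 D2 B2 add2 sc2 \<longleftrightarrow> bij_betw F D1 D2 \<and>
     (\<forall>d\<in>D1. \<forall>d'\<in>D1. F (restrict (\<lambda>x. add1 (d x) (d' x)) B1) = restrict (\<lambda>y. add2 (F d y) (F d' y)) B2) \<and>
     (\<forall>c. \<forall>d\<in>D1. F (restrict (\<lambda>x. sc1 c (d x)) B1) = restrict (\<lambda>y. sc2 c (F d y)) B2)"

definition CA :: "('k \<Rightarrow> 'a::ab_group_add \<Rightarrow> 'a) \<Rightarrow> ('a \<Rightarrow> 'a \<Rightarrow> 'a) \<Rightarrow> ('a \<Rightarrow> 'a) set" where
  "CA sA mA = centroid_on UNIV (+) sA mA"

definition rels_AS :: "('k::field \<Rightarrow> 'a::ab_group_add \<Rightarrow> 'a) \<Rightarrow> ('k \<Rightarrow> 's::comm_ring_1 \<Rightarrow> 's) \<Rightarrow> ('a \<times> 's \<Rightarrow> 'k) set" where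
  "rels_AS sA sS = tensor_rels (+) sA UNIV (+) sS UNIV"

definition TAS :: "('k::field \<Rightarrow> 'a::ab_group_add \<Rightarrow> 'a) \<Rightarrow> ('k \<Rightarrow> 's::comm_ring_1 \<Rightarrow> 's) \<Rightarrow> ('a \<times> 's \<Rightarrow> 'k) set set" where
  "TAS sA sS = tcarrier (rels_AS sA sS) UNIV UNIV"

definition mulAS :: "('k::field \<Rightarrow> 'a::ab_group_add \<Rightarrow> 'a) \<Rightarrow> ('k \<Rightarrow> 's::comm_ring_1 \<Rightarrow> 's) \<Rightarrow> ('a \<Rightarrow> 'a \<Rightarrow> 'a) \<Rightarrow>
    ('a \<times> 's \<Rightarrow> 'k) set \<Rightarrow> ('a \<times> 's \<Rightarrow> 'k) set \<Rightarrow> ('a \<times> 's \<Rightarrow> 'k) set" where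
  "mulAS sA sS mA X Y = tcls (rels_AS sA sS) (fmul2 (\<lambda>(a, s) (b, t). (mA a b, s * t)) (rep X) (rep Y))"

definition rels_CS :: "('k::field \<Rightarrow> 'a::ab_group_add \<Rightarrow> 'a) \<Rightarrow> ('a \<Rightarrow> 'a \<Rightarrow> 'a) \<Rightarrow> ('k \<Rightarrow> 's::comm_ring_1 \<Rightarrow> 's) \<Rightarrow>
    (('a \<Rightarrow> 'a) \<times> 's \<Rightarrow> 'k) set" where
  "rels_CS sA mA sS = tensor_rels (\<lambda>g g' x. g x + g' x) (\<lambda>c g x. sA c (g x)) (CA sA mA) (+) sS UNIV"

definition TCS :: "('k::field \<Rightarrow> 'a::ab_group_add \<Rightarrow> 'a) \<Rightarrow> ('a \<Rightarrow> 'a \<Rightarrow> 'a) \<Rightarrow> ('k \<Rightarrow> 's::comm_ring_1 \<Rightarrow> 's) \<Rightarrow>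
    (('a \<Rightarrow> 'a) \<times> 's \<Rightarrow> 'k) set set" where
  "TCS sA mA sS = tcarrier (rels_CS sA mA sS) (CA sA mA) UNIV"

definition mulCS :: "('k::field \<Rightarrow> 'a::ab_group_add \<Rightarrow> 'a) \<Rightarrow> ('a \<Rightarrow> 'a \<Rightarrow> 'a) \<Rightarrow> ('k \<Rightarrow> 's::comm_ring_1 \<Rightarrow> 's) \<Rightarrow>
    (('a \<Rightarrow> 'a) \<times> 's \<Rightarrow> 'k) set \<Rightarrow> (('a \<Rightarrow> 'a) \<times> 's \<Rightarrow> 'k) set \<Rightarrow> (('a \<Rightarrow> 'a) \<times> 's \<Rightarrow> 'k) set" where
  "mulCS sA mA sS X Y = tcls (rels_CS sA mA sS) (fmul2 (\<lambda>(g, s) (g', t). (g \<circ> g', s * t)) (rep X) (rep Y))"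

definition OneS :: "('k::field \<Rightarrow> 'a::ab_group_add \<Rightarrow> 'a) \<Rightarrow> ('a \<Rightarrow> 'a \<Rightarrow> 'a) \<Rightarrow> ('k \<Rightarrow> 's::comm_ring_1 \<Rightarrow> 's) \<Rightarrow>
    (('a \<Rightarrow> 'a) \<times> 's \<Rightarrow> 'k) set set" where
  "OneS sA mA sS = {tmk (rels_CS sA mA sS) id s | s. True}"

text \<open>\<psi> : C(A) \<otimes> S \<rightarrow> End(A \<otimes> S), g \<otimes> s \<mapsto> g \<otimes> L_s, i.e. (a \<otimes> t) \<mapsto> g a \<otimes> s t.\<close>
definition psi :: "('k::field \<Rightarrow> 'a::ab_group_add \<Rightarrow> 'a) \<Rightarrow> ('a \<Rightarrow> 'a \<Rightarrow> 'a) \<Rightarrow> ('k \<Rightarrow> 's::comm_ring_1 \<Rightarrow> 's) \<Rightarrow>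
    (('a \<Rightarrow> 'a) \<times> 's \<Rightarrow> 'k) set \<Rightarrow> ('a \<times> 's \<Rightarrow> 'k) set \<Rightarrow> ('a \<times> 's \<Rightarrow> 'k) set" where
  "psi sA mA sS X = restrict (\<lambda>Y. tcls (rels_AS sA sS) (fmul2 (\<lambda>(g, s) (a, t). (g a, s * t)) (rep X) (rep Y))) (TAS sA sS)"

definition DerA1 :: "('k::field \<Rightarrow> 'a::ab_group_add \<Rightarrow> 'a) \<Rightarrow> ('a \<Rightarrow> 'a \<Rightarrow> 'a) \<Rightarrow> ('k \<Rightarrow> 's::comm_ring_1 \<Rightarrow> 's) \<Rightarrow>
    (('a \<times> 's \<Rightarrow> 'k) set \<Rightarrow> ('a \<times> 's \<Rightarrow> 'k) set) set" where
  "DerA1 sA mA sS = {d \<in> derivs (TAS sA sS) (TAS sA sS) (tadd (rels_AS sA sS)) (tscale (rels_AS sA sS)) (mulAS sA sS mA).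
      \<forall>a. d (tmk (rels_AS sA sS) a 1) = tzero (rels_AS sA sS)}"

definition Der1S :: "('k::field \<Rightarrow> 'a::ab_group_add \<Rightarrow> 'a) \<Rightarrow> ('a \<Rightarrow> 'a \<Rightarrow> 'a) \<Rightarrow> ('k \<Rightarrow> 's::comm_ring_1 \<Rightarrow> 's) \<Rightarrow>
    ((('a \<Rightarrow> 'a) \<times> 's \<Rightarrow> 'k) set \<Rightarrow> (('a \<Rightarrow> 'a) \<times> 's \<Rightarrow> 'k) set) set" where
  "Der1S sA mA sS = derivs (OneS sA mA sS) (TCS sA mA sS) (tadd (rels_CS sA mA sS)) (tscale (rels_CS sA mA sS)) (mulCS sA mA sS)"

end

theory Submission
  imports Defs
begin

definition supp :: "('p \<Rightarrow> 'k::zero) \<Rightarrow> 'p set" where "supp f = {p. f p \<noteq> 0}"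
definition fs :: "('p \<Rightarrow> 'k::zero) \<Rightarrow> bool" where "fs f \<longleftrightarrow> finite (supp f)"

definition fsub :: "('p \<Rightarrow> 'k::comm_ring_1) set \<Rightarrow> bool" where
  "fsub R \<longleftrightarrow> (\<lambda>_. 0) \<in> R \<and> (\<forall>f\<in>R. \<forall>g\<in>R. (\<lambda>p. f p + g p) \<in> R) \<and> (\<forall>c. \<forall>f\<in>R. (\<lambda>p. c * f p) \<in> R)"

lemma fsub_0: "fsub R \<Longrightarrow> (\<lambda>_. 0) \<in> R" by (simp add: fsub_def)
lemma fsub_add: "fsub R \<Longrightarrow> f \<in> R \<Longrightarrow> g \<in> R \<Longrightarrow> (\<lambda>p. f p + g p) \<in> R" by (simp add: fsub_def)
lemma fsub_scale: "fsub R \<Longrightarrow> f \<in> R \<Longrightarrow> (\<lambda>p. c * f p) \<in> R" by (simp add: fsub_def)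
lemma fsub_diff: "fsub R \<Longrightarrow> f \<in> R \<Longrightarrow> g \<in> R \<Longrightarrow> (\<lambda>p. f p - g p) \<in> R"
proof -
  assume a: "fsub R" "f \<in> R" "g \<in> R"
  have "(\<lambda>p. f p + (-1) * g p) \<in> R" using a by (intro fsub_add fsub_scale) auto
  then show ?thesis by simp
qed
lemma fsub_eq: "f \<in> R \<Longrightarrow> g = f \<Longrightarrow> g \<in> R" by simp

lemma fsub_sum: assumes "fsub R" shows "finite t \<Longrightarrow> (\<And>i. i \<in> t \<Longrightarrow> h i \<in> R) \<Longrightarrow> (\<lambda>p. \<Sum>i\<in>t. h i p) \<in> R"
proof (induction t rule: finite_induct)
  case empty then show ?case using assms by (simp add: fsub_0)
next
  case (insert x F)
  then have "(\<lambda>p. h x p + (\<Sum>i\<in>F. h i p)) \<in> R" using assms by (intro fsub_add) auto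
  then show ?case using insert by simp
qed

lemma lincombsI: "finite t \<Longrightarrow> t \<subseteq> G \<Longrightarrow> f = (\<lambda>p. \<Sum>g\<in>t. r g * g p) \<Longrightarrow> f \<in> lincombs G"
  unfolding lincombs_def by blast

lemma lincombs_fsub: "fsub (lincombs G)"
proof -
  have 0: "(\<lambda>_. 0) \<in> lincombs G" unfolding lincombs_def
    by (rule CollectI, rule exI[of _ "{}"]) auto
  have add: "(\<lambda>p. f p + g p) \<in> lincombs G" if "f \<in> lincombs G" "g \<in> lincombs G" for f g
  proof -
    from that obtain t1 r1 t2 r2 where f: "f = (\<lambda>p. \<Sum>g\<in>t1. r1 g * g p)" "finite t1" "t1 \<subseteq> G"
      and g: "g = (\<lambda>p. \<Sum>g\<in>t2. r2 g * g p)" "finite t2" "t2 \<subseteq> G"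
      unfolding lincombs_def by blast
    define r1' where "r1' x = (if x \<in> t1 then r1 x else 0)" for x
    define r2' where "r2' x = (if x \<in> t2 then r2 x else 0)" for x
    define r where "r x = r1' x + r2' x" for x
    have "(\<lambda>p. f p + g p) = (\<lambda>p. \<Sum>x\<in>t1 \<union> t2. r x * x p)"
    proof
      fix p
      have e1: "(\<Sum>x\<in>t1 \<union> t2. r1' x * x p) = (\<Sum>x\<in>t1. r1 x * x p)"
        by (rule sum.mono_neutral_cong_right) (use f g in \<open>auto simp: r1'_def\<close>)
      have e2: "(\<Sum>x\<in>t1 \<union> t2. r2' x * x p) = (\<Sum>x\<in>t2. r2 x * x p)"
        by (rule sum.mono_neutral_cong_right) (use f g in \<open>auto simp: r2'_def\<close>)
      have "(\<Sum>x\<in>t1 \<union> t2. r x * x p) = (\<Sum>x\<in>t1 \<union> t2. r1' x * x p) + (\<Sum>x\<in>t1 \<union> t2. r2' x * x p)"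
        unfolding r_def by (simp add: distrib_right sum.distrib)
      then show "f p + g p = (\<Sum>x\<in>t1 \<union> t2. r x * x p)" using f g e1 e2 by simp
    qed
    then show ?thesis using f g by (intro lincombsI[of "t1 \<union> t2" _ _ r]) auto
  qed
  have sc: "(\<lambda>p. c * f p) \<in> lincombs G" if "f \<in> lincombs G" for f c
  proof -
    from that obtain t1 r1 where f: "f = (\<lambda>p. \<Sum>g\<in>t1. r1 g * g p)" "finite t1" "t1 \<subseteq> G"
      unfolding lincombs_def by blast
    have "(\<lambda>p. c * f p) = (\<lambda>p. \<Sum>g\<in>t1. (c * r1 g) * g p)" using f
      by (simp add: sum_distrib_left mult.assoc)
    then show ?thesis using f by (intro lincombsI[of t1 _ _ "\<lambda>g. c * r1 g"]) auto
  qed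
  show ?thesis unfolding fsub_def using 0 add sc by blast
qed

lemma lincombs_gen: "g \<in> G \<Longrightarrow> g \<in> lincombs G"
proof -
  assume "g \<in> G"
  have "g = (\<lambda>p. \<Sum>x\<in>{g}. 1 * x p)" by simp
  then show ?thesis using \<open>g \<in> G\<close> by (intro lincombsI[of "{g}" _ _ "\<lambda>_. 1"]) auto
qed

lemma lincombs_least: "fsub R \<Longrightarrow> G \<subseteq> R \<Longrightarrow> f \<in> lincombs G \<Longrightarrow> f \<in> R"
proof -
  assume a: "fsub R" "G \<subseteq> R" "f \<in> lincombs G"
  then obtain t r where f: "f = (\<lambda>p. \<Sum>g\<in>t. r g * g p)" "finite t" "t \<subseteq> G"
    unfolding lincombs_def by blast
  show ?thesis unfolding f(1) using a f by (intro fsub_sum) (auto intro: fsub_scale)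
qed

lemma fs_0[simp]: "fs (\<lambda>_. 0)" by (simp add: fs_def supp_def)
lemma fs_add[simp]: "fs (f::_\<Rightarrow>'k::comm_ring_1) \<Longrightarrow> fs g \<Longrightarrow> fs (\<lambda>p. f p + g p)"
  unfolding fs_def supp_def by (rule finite_subset[of _ "{p. f p \<noteq> 0} \<union> {p. g p \<noteq> 0}"]) auto
lemma fs_scale[simp]: "fs (f::_\<Rightarrow>'k::comm_ring_1) \<Longrightarrow> fs (\<lambda>p. c * f p)"
  unfolding fs_def supp_def by (rule finite_subset[of _ "{p. f p \<noteq> 0}"]) auto
lemma fs_diff[simp]: "fs (f::_\<Rightarrow>'k::comm_ring_1) \<Longrightarrow> fs g \<Longrightarrow> fs (\<lambda>p. f p - g p)"
  unfolding fs_def supp_def by (rule finite_subset[of _ "{p. f p \<noteq> 0} \<union> {p. g p \<noteq> 0}"]) auto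
lemma supp_ind[simp]: "supp (ind q :: _ \<Rightarrow> 'k::zero_neq_one) = {q}"
  by (auto simp: supp_def ind_def)
lemma fs_ind[simp]: "fs (ind q :: _ \<Rightarrow> 'k::zero_neq_one)" by (simp add: fs_def)
lemma ind_apply: "ind q p = (if p = q then 1 else 0)" by (simp add: ind_def)

lemma fs_decomp: assumes "fs (f :: 'p \<Rightarrow> 'k::comm_ring_1)" shows "f = (\<lambda>p. \<Sum>q\<in>supp f. f q * ind q p)"
proof
  fix p
  have "(\<Sum>q\<in>supp f. f q * ind q p) = (\<Sum>q\<in>supp f. if q = p then f q else 0)"
    by (rule sum.cong) (auto simp: ind_def)
  also have "\<dots> = f p" using assms by (auto simp: fs_def supp_def)
  finally show "f p = (\<Sum>q\<in>supp f. f q * ind q p)" by simp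
qed

lemma free_on_iff: "f \<in> free_on U V \<longleftrightarrow> fs f \<and> supp f \<subseteq> U \<times> V"
  by (simp add: free_on_def fs_def supp_def)

lemma fs_in_lincombs_ind:
  fixes f :: "'u \<times> 'v \<Rightarrow> 'k::comm_ring_1"
  assumes "f \<in> free_on U V" shows "f \<in> lincombs (ind ` (U \<times> V))"
proof -
  have fs: "fs f" and s: "supp f \<subseteq> U \<times> V" using assms by (auto simp: free_on_iff)
  have inj: "inj (ind :: 'u \<times> 'v \<Rightarrow> _ \<Rightarrow> 'k)"
  proof (rule injI)
    fix x y :: "'u \<times> 'v" assume "ind x = (ind y :: _ \<Rightarrow> 'k)"
    then have "ind x x = (ind y x :: 'k)" by simp
    then show "x = y" by (auto simp: ind_def split: if_splits)
  qed
  define r where "r g = f (inv ind g)" for g :: "'u \<times> 'v \<Rightarrow> 'k"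
  have "f = (\<lambda>p. \<Sum>q\<in>supp f. f q * ind q p)" by (rule fs_decomp[OF fs])
  also have "\<dots> = (\<lambda>p. \<Sum>g\<in>ind ` supp f. r g * g p)"
    by (subst sum.reindex) (auto simp: inj_on_def inj[THEN injD] r_def inv_f_f[OF inj])
  finally show ?thesis using fs s by (intro lincombsI[of "ind ` supp f" _ _ r]) (auto simp: fs_def)
qed

definition flin :: "(('p \<Rightarrow> 'k::comm_ring_1) \<Rightarrow> ('q \<Rightarrow> 'k)) \<Rightarrow> bool" where
  "flin \<Phi> \<longleftrightarrow> (\<forall>f g. fs f \<longrightarrow> fs g \<longrightarrow> \<Phi> (\<lambda>p. f p + g p) = (\<lambda>x. \<Phi> f x + \<Phi> g x)) \<and>
              (\<forall>f c. fs f \<longrightarrow> \<Phi> (\<lambda>p. c * f p) = (\<lambda>x. c * \<Phi> f x))"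

lemma fs_sum: assumes "finite t" "\<And>g. g \<in> t \<Longrightarrow> fs (g::_\<Rightarrow>'k::comm_ring_1)"
  shows "fs (\<lambda>p. \<Sum>g\<in>t. r g * g p)"
  using assms
proof (induction t rule: finite_induct)
  case (insert x F)
  have "fs (\<lambda>p. r x * x p + (\<Sum>g\<in>F. r g * g p))" using insert by (intro fs_add fs_scale) auto
  then show ?case using insert by simp
qed simp

lemma flin_addD: "flin \<Phi> \<Longrightarrow> fs f \<Longrightarrow> fs g \<Longrightarrow> \<Phi> (\<lambda>p. f p + g p) = (\<lambda>x. \<Phi> f x + \<Phi> g x)"
  unfolding flin_def by blast
lemma flin_scaleD: "flin \<Phi> \<Longrightarrow> fs f \<Longrightarrow> \<Phi> (\<lambda>p. c * f p) = (\<lambda>x. c * \<Phi> f x)"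
  unfolding flin_def by blast

lemma flin_sum: fixes \<Phi> :: "('p \<Rightarrow> 'k::comm_ring_1) \<Rightarrow> ('q \<Rightarrow> 'k)" assumes "flin \<Phi>" shows "finite t \<Longrightarrow> (\<And>g. g \<in> t \<Longrightarrow> fs g) \<Longrightarrow>
   \<Phi> (\<lambda>p. \<Sum>g\<in>t. r g * g p) = (\<lambda>x. \<Sum>g\<in>t. r g * \<Phi> g x)"
proof (induction t rule: finite_induct)
  case empty
  have "\<Phi> (\<lambda>p. 0 * (0::'k)) = (\<lambda>x. 0 * \<Phi> (\<lambda>_. 0) x)" using flin_scaleD[OF assms fs_0] .
  then show ?case by simp
next
  case (insert x F)
  have fsF: "fs (\<lambda>p. \<Sum>g\<in>F. r g * g p)"
    using insert by (intro fs_sum) auto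
  have "\<Phi> (\<lambda>p. \<Sum>g\<in>insert x F. r g * g p) = \<Phi> (\<lambda>p. (\<lambda>p. r x * x p) p + (\<lambda>p. \<Sum>g\<in>F. r g * g p) p)"
    using insert by simp
  also have "\<dots> = (\<lambda>y. \<Phi> (\<lambda>p. r x * x p) y + \<Phi> (\<lambda>p. \<Sum>g\<in>F. r g * g p) y)"
    using assms fsF insert(4) by (intro flin_addD) auto
  also have "\<dots> = (\<lambda>y. r x * \<Phi> x y + (\<Sum>g\<in>F. r g * \<Phi> g y))"
    using insert flin_scaleD[OF assms] by simp
  finally show ?case using insert by simp
qed

lemma lincombs_map:
  assumes "fsub R'" "flin \<Phi>" "\<And>g. g \<in> G \<Longrightarrow> fs g \<and> \<Phi> g \<in> R'" "f \<in> lincombs G"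
  shows "\<Phi> f \<in> R'"
proof -
  obtain t r where f: "f = (\<lambda>p. \<Sum>g\<in>t. r g * g p)" "finite t" "t \<subseteq> G"
    using assms(4) unfolding lincombs_def by blast
  have "\<Phi> f = (\<lambda>x. \<Sum>g\<in>t. r g * \<Phi> g x)" unfolding f(1) using assms f by (intro flin_sum) auto
  also have "\<dots> \<in> R'" using assms f by (intro fsub_sum) (auto intro: fsub_scale)
  finally show ?thesis .
qed

lemma lincombs_fs: "(\<And>g. g \<in> G \<Longrightarrow> fs g) \<Longrightarrow> f \<in> lincombs G \<Longrightarrow> fs f"
  unfolding lincombs_def
proof clarify
  fix t r assume a: "\<And>g. g \<in> G \<Longrightarrow> fs g" "finite t" "t \<subseteq> G"
  show "fs (\<lambda>p. \<Sum>g\<in>t. r g * g p)"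
    using a by (intro fs_sum) auto
qed

lemma lincombs_supp: "(\<And>g. g \<in> G \<Longrightarrow> supp g \<subseteq> A) \<Longrightarrow> f \<in> lincombs G \<Longrightarrow> supp f \<subseteq> A"
  unfolding lincombs_def
proof clarify
  fix t r p assume a: "\<And>g. g \<in> G \<Longrightarrow> supp g \<subseteq> A" "finite t" "t \<subseteq> G"
    and p: "p \<in> supp (\<lambda>p. \<Sum>g\<in>t. r g * g p)"
  then obtain g where "g \<in> t" "g p \<noteq> 0" unfolding supp_def
    by (metis (mono_tags, lifting) mem_Collect_eq mult_zero_right sum.neutral)
  then show "p \<in> A" using a unfolding supp_def by blast
qed

lemma tcls_mem: "g \<in> tcls R f \<longleftrightarrow> (\<lambda>p. g p - f p) \<in> R" by (simp add: tcls_def)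

lemma self_in_tcls: "fsub R \<Longrightarrow> f \<in> tcls R f"
  by (simp add: tcls_def fsub_0)

lemma tcls_eq_iff: assumes "fsub R" shows "tcls R f = tcls R g \<longleftrightarrow> (\<lambda>p. f p - g p) \<in> R"
proof
  assume "tcls R f = tcls R g"
  then have "f \<in> tcls R g" using self_in_tcls[OF assms] by blast
  then show "(\<lambda>p. f p - g p) \<in> R" by (simp add: tcls_def)
next
  assume fg: "(\<lambda>p. f p - g p) \<in> R"
  show "tcls R f = tcls R g"
  proof (rule set_eqI)
    fix h
    have 1: "(\<lambda>p. h p - g p) = (\<lambda>p. (h p - f p) + (f p - g p))" by simp
    have 2: "(\<lambda>p. h p - f p) = (\<lambda>p. (h p - g p) - (f p - g p))" by simp
    show "h \<in> tcls R f \<longleftrightarrow> h \<in> tcls R g" unfolding tcls_def mem_Collect_eq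
    proof
      assume "(\<lambda>p. h p - f p) \<in> R"
      from fsub_add[OF assms this fg] show "(\<lambda>p. h p - g p) \<in> R" by (simp only: 1)
    next
      assume "(\<lambda>p. h p - g p) \<in> R"
      from fsub_diff[OF assms this fg] show "(\<lambda>p. h p - f p) \<in> R" by (simp only: 2)
    qed
  qed
qed

lemma rep_tcls: "fsub R \<Longrightarrow> (\<lambda>p. rep (tcls R f) p - f p) \<in> R"
proof -
  assume a: "fsub R"
  have "rep (tcls R f) \<in> tcls R f" unfolding rep_def by (rule someI[of _ f]) (rule self_in_tcls[OF a])
  then show ?thesis by (simp add: tcls_def)
qed

lemma tcls_rep: "fsub R \<Longrightarrow> tcls R (rep (tcls R f)) = tcls R f"
  by (simp add: tcls_eq_iff rep_tcls)

lemma tadd_cls: assumes "fsub R" shows "tadd R (tcls R f) (tcls R g) = tcls R (\<lambda>p. f p + g p)"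
proof -
  have "(\<lambda>p. (rep (tcls R f) p + rep (tcls R g) p) - (f p + g p)) =
        (\<lambda>p. (rep (tcls R f) p - f p) + (rep (tcls R g) p - g p))" by (simp add: algebra_simps)
  also have "\<dots> \<in> R" using assms by (intro fsub_add rep_tcls)
  finally show ?thesis unfolding tadd_def using assms by (simp add: tcls_eq_iff)
qed

lemma tscale_cls: assumes "fsub R" shows "tscale R c (tcls R f) = tcls R (\<lambda>p. c * f p)"
proof -
  have "(\<lambda>p. c * rep (tcls R f) p - c * f p) = (\<lambda>p. c * (rep (tcls R f) p - f p))" by (simp add: algebra_simps)
  also have "\<dots> \<in> R" using assms by (intro fsub_scale rep_tcls)
  finally show ?thesis unfolding tscale_def using assms by (simp add: tcls_eq_iff)
qed

lemma fmul2_sum: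
  assumes "finite P" "supp f \<subseteq> P" "finite Q" "supp g \<subseteq> Q"
  shows "fmul2 m f g r = (\<Sum>p\<in>P. \<Sum>q\<in>Q. if m p q = r then f p * g q else 0)"
proof -
  have "fmul2 m f g r = (\<Sum>p\<in>supp f. \<Sum>q\<in>supp g. if m p q = r then f p * g q else 0)"
    by (simp add: fmul2_def supp_def)
  also have "\<dots> = (\<Sum>p\<in>supp f. \<Sum>q\<in>Q. if m p q = r then f p * g q else 0)"
    by (rule sum.cong[OF refl], rule sum.mono_neutral_left) (use assms in \<open>auto simp: supp_def\<close>)
  also have "\<dots> = (\<Sum>p\<in>P. \<Sum>q\<in>Q. if m p q = r then f p * g q else 0)"
  proof (rule sum.mono_neutral_left)
    show "\<forall>i\<in>P - supp f. (\<Sum>q\<in>Q. if m i q = r then f i * g q else 0) = 0"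
    proof
      fix i assume "i \<in> P - supp f"
      then have "f i = 0" by (simp add: supp_def)
      then show "(\<Sum>q\<in>Q. if m i q = r then f i * g q else 0) = 0" by (simp cong: if_cong)
    qed
  qed (use assms in auto)
  finally show ?thesis .
qed

lemma fmul2_add_left:
  fixes f1 :: "'p \<Rightarrow> 'k::comm_ring"
  assumes "fs f1" "fs f2" "fs g"
  shows "fmul2 m (\<lambda>p. f1 p + f2 p) g = (\<lambda>r. fmul2 m f1 g r + fmul2 m f2 g r)"
proof
  fix r
  let ?P = "supp f1 \<union> supp f2" and ?Q = "supp g"
  have s: "supp (\<lambda>p. f1 p + f2 p) \<subseteq> ?P" by (auto simp: supp_def)
  have f: "finite ?P" "finite ?Q" using assms by (auto simp: fs_def)
  show "fmul2 m (\<lambda>p. f1 p + f2 p) g r = fmul2 m f1 g r + fmul2 m f2 g r"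
    using f s
  proof -
    have e: "\<And>p q. (if m p q = r then (f1 p + f2 p) * g q else 0) = (if m p q = r then f1 p * g q else 0) + (if m p q = r then f2 p * g q else 0)"
      by (simp add: distrib_right)
    have h: "fmul2 m (\<lambda>p. f1 p + f2 p) g r = (\<Sum>p\<in>?P. \<Sum>q\<in>?Q. if m p q = r then (f1 p + f2 p) * g q else 0)"
      by (rule fmul2_sum) (use f s in auto)
    have h1: "fmul2 m f1 g r = (\<Sum>p\<in>?P. \<Sum>q\<in>?Q. if m p q = r then f1 p * g q else 0)"
      by (rule fmul2_sum) (use f in auto)
    have h2: "fmul2 m f2 g r = (\<Sum>p\<in>?P. \<Sum>q\<in>?Q. if m p q = r then f2 p * g q else 0)"
      by (rule fmul2_sum) (use f in auto)
    show ?thesis by (simp only: h h1 h2 e sum.distrib)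
  qed
qed

lemma fmul2_scale_left:
  fixes f :: "'p \<Rightarrow> 'k::comm_ring"
  assumes "fs f" "fs g"
  shows "fmul2 m (\<lambda>p. c * f p) g = (\<lambda>r. c * fmul2 m f g r)"
proof
  fix r
  let ?P = "supp f" and ?Q = "supp g"
  have s: "supp (\<lambda>p. c * f p) \<subseteq> ?P" by (auto simp: supp_def)
  have f: "finite ?P" "finite ?Q" using assms by (auto simp: fs_def)
  have h: "fmul2 m (\<lambda>p. c * f p) g r = (\<Sum>p\<in>?P. \<Sum>q\<in>?Q. if m p q = r then (c * f p) * g q else 0)"
    by (rule fmul2_sum) (use f s in auto)
  have h1: "fmul2 m f g r = (\<Sum>p\<in>?P. \<Sum>q\<in>?Q. if m p q = r then f p * g q else 0)"
    by (rule fmul2_sum) (use f in auto)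
  have e: "\<And>p q. (if m p q = r then (c * f p) * g q else 0) = c * (if m p q = r then f p * g q else 0)"
    by (simp add: ac_simps)
  show "fmul2 m (\<lambda>p. c * f p) g r = c * fmul2 m f g r"
    by (simp only: h h1 e sum_distrib_left)
qed

lemma fmul2_add_right:
  fixes f :: "'p \<Rightarrow> 'k::comm_ring"
  assumes "fs f" "fs g1" "fs g2"
  shows "fmul2 m f (\<lambda>p. g1 p + g2 p) = (\<lambda>r. fmul2 m f g1 r + fmul2 m f g2 r)"
proof
  fix r
  let ?P = "supp f" and ?Q = "supp g1 \<union> supp g2"
  have s: "supp (\<lambda>p. g1 p + g2 p) \<subseteq> ?Q" by (auto simp: supp_def)
  have f: "finite ?P" "finite ?Q" using assms by (auto simp: fs_def)
  show "fmul2 m f (\<lambda>p. g1 p + g2 p) r = fmul2 m f g1 r + fmul2 m f g2 r"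
    using f s
  proof -
    have e: "\<And>p q. (if m p q = r then f p * (g1 q + g2 q) else 0) = (if m p q = r then f p * g1 q else 0) + (if m p q = r then f p * g2 q else 0)"
      by (simp add: distrib_left)
    have h: "fmul2 m f (\<lambda>p. g1 p + g2 p) r = (\<Sum>p\<in>?P. \<Sum>q\<in>?Q. if m p q = r then f p * (g1 q + g2 q) else 0)"
      by (rule fmul2_sum) (use f s in auto)
    have h1: "fmul2 m f g1 r = (\<Sum>p\<in>?P. \<Sum>q\<in>?Q. if m p q = r then f p * g1 q else 0)"
      by (rule fmul2_sum) (use f in auto)
    have h2: "fmul2 m f g2 r = (\<Sum>p\<in>?P. \<Sum>q\<in>?Q. if m p q = r then f p * g2 q else 0)"
      by (rule fmul2_sum) (use f in auto)
    show ?thesis by (simp only: h h1 h2 e sum.distrib)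
  qed
qed

lemma fmul2_scale_right:
  fixes f :: "'p \<Rightarrow> 'k::comm_ring"
  assumes "fs f" "fs g"
  shows "fmul2 m f (\<lambda>p. c * g p) = (\<lambda>r. c * fmul2 m f g r)"
proof
  fix r
  let ?P = "supp f" and ?Q = "supp g"
  have s: "supp (\<lambda>p. c * g p) \<subseteq> ?Q" by (auto simp: supp_def)
  have f: "finite ?P" "finite ?Q" using assms by (auto simp: fs_def)
  have h: "fmul2 m f (\<lambda>p. c * g p) r = (\<Sum>p\<in>?P. \<Sum>q\<in>?Q. if m p q = r then f p * (c * g q) else 0)"
    by (rule fmul2_sum) (use f s in auto)
  have h1: "fmul2 m f g r = (\<Sum>p\<in>?P. \<Sum>q\<in>?Q. if m p q = r then f p * g q else 0)"
    by (rule fmul2_sum) (use f in auto)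
  have e: "\<And>p q. (if m p q = r then f p * (c * g q) else 0) = c * (if m p q = r then f p * g q else 0)"
    by (simp add: ac_simps)
  show "fmul2 m f (\<lambda>p. c * g p) r = c * fmul2 m f g r"
    by (simp only: h h1 e sum_distrib_left)
qed

lemma fmul2_diff_left:
  fixes f1 :: "'p \<Rightarrow> 'k::comm_ring_1"
  assumes "fs f1" "fs f2" "fs g"
  shows "fmul2 m (\<lambda>p. f1 p - f2 p) g = (\<lambda>r. fmul2 m f1 g r - fmul2 m f2 g r)"
proof -
  have "(\<lambda>p. f1 p - f2 p) = (\<lambda>p. f1 p + (\<lambda>p. (-1) * f2 p) p)" by simp
  then show ?thesis using fmul2_add_left[OF assms(1) fs_scale[OF assms(2)] assms(3), of m "-1"]
    fmul2_scale_left[OF assms(2,3), of m "-1"] by simp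
qed

lemma fmul2_diff_right:
  fixes f :: "'p \<Rightarrow> 'k::comm_ring_1"
  assumes "fs f" "fs g1" "fs g2"
  shows "fmul2 m f (\<lambda>p. g1 p - g2 p) = (\<lambda>r. fmul2 m f g1 r - fmul2 m f g2 r)"
proof -
  have "(\<lambda>p. g1 p - g2 p) = (\<lambda>p. g1 p + (\<lambda>p. (-1) * g2 p) p)" by simp
  then show ?thesis using fmul2_add_right[OF assms(1,2) fs_scale[OF assms(3)], of m "-1"]
    fmul2_scale_right[OF assms(1,3), of m "-1"] by simp
qed

lemma fmul2_ind: "fmul2 m (ind p) (ind q) = (ind (m p q) :: _ \<Rightarrow> 'k::{comm_ring_1})"
proof
  fix r
  show "fmul2 m (ind p) (ind q) r = (ind (m p q) r :: 'k)"
    by (simp add: fmul2_sum[of "{p}" _ "{q}"] ind_def)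
qed

lemma supp_fmul2: "supp (fmul2 m f g) \<subseteq> (\<lambda>(p, q). m p q) ` (supp f \<times> supp g)"
proof
  fix r assume "r \<in> supp (fmul2 m f g)"
  then have "(\<Sum>p\<in>supp f. \<Sum>q\<in>supp g. if m p q = r then f p * g q else 0) \<noteq> 0"
    by (simp add: supp_def fmul2_def)
  moreover have "(\<Sum>p\<in>supp f. \<Sum>q\<in>supp g. if m p q = r then f p * g q else 0) = 0"
    if H: "\<forall>p\<in>supp f. \<forall>q\<in>supp g. m p q \<noteq> r"
    by (intro sum.neutral ballI) (use H in auto)
  ultimately obtain p q where "p \<in> supp f" "q \<in> supp g" "m p q = r" by blast
  then show "r \<in> (\<lambda>(p, q). m p q) ` (supp f \<times> supp g)" by force
qed

lemma fs_fmul2[simp]: "fs f \<Longrightarrow> fs g \<Longrightarrow> fs (fmul2 m f g)"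
  unfolding fs_def by (rule finite_subset[OF supp_fmul2]) auto

lemma flin_fmul2_left: "fs (g :: _ \<Rightarrow> 'k::comm_ring_1) \<Longrightarrow> flin (\<lambda>f. fmul2 m f g)"
  by (simp add: flin_def fmul2_add_left fmul2_scale_left)
lemma flin_fmul2_right: "fs (f :: _ \<Rightarrow> 'k::comm_ring_1) \<Longrightarrow> flin (\<lambda>g. fmul2 m f g)"
  by (simp add: flin_def fmul2_add_right fmul2_scale_right)

definition tgens where
  "tgens addU scU U addV scV V =
     {(\<lambda>p. ind (addU u u', v) p - ind (u, v) p - ind (u', v) p) | u u' v. u \<in> U \<and> u' \<in> U \<and> v \<in> V}
   \<union> {(\<lambda>p. ind (u, addV v v') p - ind (u, v) p - ind (u, v') p) | u v v'. u \<in> U \<and> v \<in> V \<and> v' \<in> V}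
   \<union> {(\<lambda>p. ind (scU c u, v) p - c * ind (u, v) p) | c u v. u \<in> U \<and> v \<in> V}
   \<union> {(\<lambda>p. ind (u, scV c v) p - c * ind (u, v) p) | c u v. u \<in> U \<and> v \<in> V}"

lemma tensor_rels_lincombs: "tensor_rels addU scU U addV scV V = lincombs (tgens addU scU U addV scV V)"
  unfolding tensor_rels_def tgens_def ..

lemma tensor_rels_fsub: "fsub (tensor_rels addU scU U addV scV V)"
  unfolding tensor_rels_lincombs by (rule lincombs_fsub)

lemma supp_add_sub: "supp (\<lambda>p. f p + g p :: 'k::comm_ring_1) \<subseteq> supp f \<union> supp g" by (auto simp: supp_def)
lemma supp_scale_sub: "supp (\<lambda>p. c * f p :: 'k::comm_ring_1) \<subseteq> supp f" by (auto simp: supp_def)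
lemma supp_diff_sub: "supp (\<lambda>p. f p - g p :: 'k::comm_ring_1) \<subseteq> supp f \<union> supp g" by (auto simp: supp_def)

lemma free_on_add: "f \<in> free_on U V \<Longrightarrow> g \<in> free_on U V \<Longrightarrow> (\<lambda>p. f p + g p :: 'k::comm_ring_1) \<in> free_on U V"
  unfolding free_on_iff using supp_add_sub[of f g] by auto
lemma free_on_scale: "f \<in> free_on U V \<Longrightarrow> (\<lambda>p. c * f p :: 'k::comm_ring_1) \<in> free_on U V"
  unfolding free_on_iff using supp_scale_sub[of c f] by auto
lemma free_on_diff: "f \<in> free_on U V \<Longrightarrow> g \<in> free_on U V \<Longrightarrow> (\<lambda>p. f p - g p :: 'k::comm_ring_1) \<in> free_on U V"
  unfolding free_on_iff using supp_diff_sub[of f g] by auto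
lemma free_on_ind: "(u, v) \<in> U \<times> V \<Longrightarrow> (ind (u, v) :: _ \<Rightarrow> 'k::comm_ring_1) \<in> free_on U V"
  by (auto simp: free_on_iff)
lemma free_on_0: "(\<lambda>_. 0 :: 'k::comm_ring_1) \<in> free_on U V"
  by (auto simp: free_on_iff supp_def)

lemma tgens_free:
  fixes addU :: "'u \<Rightarrow> 'u \<Rightarrow> 'u" and addV :: "'v \<Rightarrow> 'v \<Rightarrow> 'v" and scU :: "'k::field \<Rightarrow> 'u \<Rightarrow> 'u"
  assumes "\<And>u u'. u \<in> U \<Longrightarrow> u' \<in> U \<Longrightarrow> addU u u' \<in> U" "\<And>c u. u \<in> U \<Longrightarrow> scU c u \<in> U"
    "\<And>v v'. v \<in> V \<Longrightarrow> v' \<in> V \<Longrightarrow> addV v v' \<in> V" "\<And>c v. v \<in> V \<Longrightarrow> scV c v \<in> V"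
  shows "g \<in> tgens addU scU U addV scV V \<Longrightarrow> g \<in> free_on U V"
  unfolding tgens_def using assms
  by (auto intro!: free_on_diff free_on_scale free_on_ind)

lemma tensor_rels_free:
  fixes addU :: "'u \<Rightarrow> 'u \<Rightarrow> 'u" and addV :: "'v \<Rightarrow> 'v \<Rightarrow> 'v" and scU :: "'k::field \<Rightarrow> 'u \<Rightarrow> 'u"
  assumes "\<And>u u'. u \<in> U \<Longrightarrow> u' \<in> U \<Longrightarrow> addU u u' \<in> U" "\<And>c u. u \<in> U \<Longrightarrow> scU c u \<in> U"
    "\<And>v v'. v \<in> V \<Longrightarrow> v' \<in> V \<Longrightarrow> addV v v' \<in> V" "\<And>c v. v \<in> V \<Longrightarrow> scV c v \<in> V"
    "f \<in> tensor_rels addU scU U addV scV V"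
  shows "f \<in> free_on U V"
proof -
  have g: "\<And>g. g \<in> tgens addU scU U addV scV V \<Longrightarrow> g \<in> free_on U V"
    by (rule tgens_free[OF assms(1-4)])
  have "fs f" using assms(5) unfolding tensor_rels_lincombs
    by (rule lincombs_fs[rotated]) (use g in \<open>auto simp: free_on_iff\<close>)
  moreover have "supp f \<subseteq> U \<times> V" using assms(5) unfolding tensor_rels_lincombs
    by (rule lincombs_supp[rotated]) (use g in \<open>auto simp: free_on_iff\<close>)
  ultimately show ?thesis by (simp add: free_on_iff)
qed

lemma rep_free:
  assumes "fsub R" "R \<subseteq> free_on U V" "f \<in> free_on U V"
  shows "rep (tcls R f) \<in> free_on U V"
proof -
  have "(\<lambda>p. f p + (rep (tcls R f) p - f p)) \<in> free_on U V"
    using assms rep_tcls[OF assms(1), of f] by (intro free_on_add) auto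
  then show ?thesis by simp
qed

lemma tcarrier_cases:
  "X \<in> tcarrier R U V \<Longrightarrow> (\<And>f. f \<in> free_on U V \<Longrightarrow> X = tcls R f \<Longrightarrow> thesis) \<Longrightarrow> thesis"
  unfolding tcarrier_def by blast

lemma tcarrier_I: "f \<in> free_on U V \<Longrightarrow> tcls R f \<in> tcarrier R U V"
  unfolding tcarrier_def by blast

locale tprod =
  fixes add1 :: "'u1 \<Rightarrow> 'u1 \<Rightarrow> 'u1" and sc1 :: "'k::field \<Rightarrow> 'u1 \<Rightarrow> 'u1" and U1
    and addV1 :: "'v1 \<Rightarrow> 'v1 \<Rightarrow> 'v1" and scV1 :: "'k \<Rightarrow> 'v1 \<Rightarrow> 'v1" and V1
    and add2 :: "'u2 \<Rightarrow> 'u2 \<Rightarrow> 'u2" and sc2 :: "'k \<Rightarrow> 'u2 \<Rightarrow> 'u2" and U2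
    and addV2 :: "'v2 \<Rightarrow> 'v2 \<Rightarrow> 'v2" and scV2 :: "'k \<Rightarrow> 'v2 \<Rightarrow> 'v2" and V2
    and add3 :: "'u3 \<Rightarrow> 'u3 \<Rightarrow> 'u3" and sc3 :: "'k \<Rightarrow> 'u3 \<Rightarrow> 'u3" and U3
    and addV3 :: "'v3 \<Rightarrow> 'v3 \<Rightarrow> 'v3" and scV3 :: "'k \<Rightarrow> 'v3 \<Rightarrow> 'v3" and V3
    and \<mu> :: "'u1 \<Rightarrow> 'u2 \<Rightarrow> 'u3" and \<nu> :: "'v1 \<Rightarrow> 'v2 \<Rightarrow> 'v3"
  assumes cl_add1: "\<And>u u'. u \<in> U1 \<Longrightarrow> u' \<in> U1 \<Longrightarrow> add1 u u' \<in> U1"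
    and cl_sc1: "\<And>c u. u \<in> U1 \<Longrightarrow> sc1 c u \<in> U1"
    and cl_addV1: "\<And>u u'. u \<in> V1 \<Longrightarrow> u' \<in> V1 \<Longrightarrow> addV1 u u' \<in> V1"
    and cl_scV1: "\<And>c u. u \<in> V1 \<Longrightarrow> scV1 c u \<in> V1"
    and cl_add2: "\<And>u u'. u \<in> U2 \<Longrightarrow> u' \<in> U2 \<Longrightarrow> add2 u u' \<in> U2"
    and cl_sc2: "\<And>c u. u \<in> U2 \<Longrightarrow> sc2 c u \<in> U2"
    and cl_addV2: "\<And>u u'. u \<in> V2 \<Longrightarrow> u' \<in> V2 \<Longrightarrow> addV2 u u' \<in> V2"
    and cl_scV2: "\<And>c u. u \<in> V2 \<Longrightarrow> scV2 c u \<in> V2"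
    and mu_in: "\<And>u w. u \<in> U1 \<Longrightarrow> w \<in> U2 \<Longrightarrow> \<mu> u w \<in> U3"
    and nu_in: "\<And>u w. u \<in> V1 \<Longrightarrow> w \<in> V2 \<Longrightarrow> \<nu> u w \<in> V3"
    and mu_add1: "\<And>u u' w. u \<in> U1 \<Longrightarrow> u' \<in> U1 \<Longrightarrow> w \<in> U2 \<Longrightarrow> \<mu> (add1 u u') w = add3 (\<mu> u w) (\<mu> u' w)"
    and mu_sc1: "\<And>c u w. u \<in> U1 \<Longrightarrow> w \<in> U2 \<Longrightarrow> \<mu> (sc1 c u) w = sc3 c (\<mu> u w)"
    and mu_add2: "\<And>u w w'. u \<in> U1 \<Longrightarrow> w \<in> U2 \<Longrightarrow> w' \<in> U2 \<Longrightarrow> \<mu> u (add2 w w') = add3 (\<mu> u w) (\<mu> u w')"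
    and mu_sc2: "\<And>c u w. u \<in> U1 \<Longrightarrow> w \<in> U2 \<Longrightarrow> \<mu> u (sc2 c w) = sc3 c (\<mu> u w)"
    and nu_add1: "\<And>u u' w. u \<in> V1 \<Longrightarrow> u' \<in> V1 \<Longrightarrow> w \<in> V2 \<Longrightarrow> \<nu> (addV1 u u') w = addV3 (\<nu> u w) (\<nu> u' w)"
    and nu_sc1: "\<And>c u w. u \<in> V1 \<Longrightarrow> w \<in> V2 \<Longrightarrow> \<nu> (scV1 c u) w = scV3 c (\<nu> u w)"
    and nu_add2: "\<And>u w w'. u \<in> V1 \<Longrightarrow> w \<in> V2 \<Longrightarrow> w' \<in> V2 \<Longrightarrow> \<nu> u (addV2 w w') = addV3 (\<nu> u w) (\<nu> u w')"
    and nu_sc2: "\<And>c u w. u \<in> V1 \<Longrightarrow> w \<in> V2 \<Longrightarrow> \<nu> u (scV2 c w) = scV3 c (\<nu> u w)"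
begin

abbreviation "R1 \<equiv> tensor_rels add1 sc1 U1 addV1 scV1 V1"
abbreviation "R2 \<equiv> tensor_rels add2 sc2 U2 addV2 scV2 V2"
abbreviation "R3 \<equiv> tensor_rels add3 sc3 U3 addV3 scV3 V3"
abbreviation "mm \<equiv> (\<lambda>(u, v) (u', v'). (\<mu> u u', \<nu> v v'))"

lemma R1_free: "R1 \<subseteq> free_on U1 V1"
  using tensor_rels_free[where addU=add1 and scU=sc1 and U=U1 and addV=addV1 and scV=scV1 and V=V1, OF cl_add1 cl_sc1 cl_addV1 cl_scV1] by blast
lemma R2_free: "R2 \<subseteq> free_on U2 V2"
  using tensor_rels_free[where addU=add2 and scU=sc2 and U=U2 and addV=addV2 and scV=scV2 and V=V2, OF cl_add2 cl_sc2 cl_addV2 cl_scV2] by blast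

lemma G3I1: "u \<in> U3 \<Longrightarrow> u' \<in> U3 \<Longrightarrow> v \<in> V3 \<Longrightarrow>
  (\<lambda>p. ind (add3 u u', v) p - ind (u, v) p - ind (u', v) p) \<in> R3"
  unfolding tensor_rels_lincombs by (rule lincombs_gen) (auto simp: tgens_def)
lemma G3I2: "u \<in> U3 \<Longrightarrow> v \<in> V3 \<Longrightarrow> v' \<in> V3 \<Longrightarrow>
  (\<lambda>p. ind (u, addV3 v v') p - ind (u, v) p - ind (u, v') p) \<in> R3"
  unfolding tensor_rels_lincombs by (rule lincombs_gen) (auto simp: tgens_def)
lemma G3I3: "u \<in> U3 \<Longrightarrow> v \<in> V3 \<Longrightarrow>
  (\<lambda>p. ind (sc3 c u, v) p - c * ind (u, v) p) \<in> R3"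
  unfolding tensor_rels_lincombs by (rule lincombs_gen) (auto simp: tgens_def)
lemma G3I4: "u \<in> U3 \<Longrightarrow> v \<in> V3 \<Longrightarrow>
  (\<lambda>p. ind (u, scV3 c v) p - c * ind (u, v) p) \<in> R3"
  unfolding tensor_rels_lincombs by (rule lincombs_gen) (auto simp: tgens_def)

lemma fm3: "fmul2 m (\<lambda>p. ind a p - ind b p - ind c p) (ind q) = (\<lambda>r. ind (m a q) r - ind (m b q) r - ind (m c q) r :: 'k)"
  by (simp add: fmul2_diff_left fmul2_ind)
lemma fm2: "fmul2 m (\<lambda>p. ind a p - c * ind b p) (ind q) = (\<lambda>r. ind (m a q) r - c * ind (m b q) r :: 'k)"
  by (simp add: fmul2_diff_left fmul2_scale_left fmul2_ind)
lemma fm3r: "fmul2 m (ind q) (\<lambda>p. ind a p - ind b p - ind c p) = (\<lambda>r. ind (m q a) r - ind (m q b) r - ind (m q c) r :: 'k)"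
  by (simp add: fmul2_diff_right fmul2_ind)
lemma fm2r: "fmul2 m (ind q) (\<lambda>p. ind a p - c * ind b p) = (\<lambda>r. ind (m q a) r - c * ind (m q b) r :: 'k)"
  by (simp add: fmul2_diff_right fmul2_scale_right fmul2_ind)

lemma gen_left:
  assumes "\<gamma> \<in> tgens add1 sc1 U1 addV1 scV1 V1" "q \<in> U2 \<times> V2"
  shows "fmul2 mm \<gamma> (ind q) \<in> R3"
proof -
  obtain w z where q: "q = (w, z)" "w \<in> U2" "z \<in> V2" using assms(2) by auto
  from assms(1) show ?thesis unfolding tgens_def
  proof (elim UnE CollectE exE conjE)
    fix u u' v assume \<gamma>: "\<gamma> = (\<lambda>p. ind (add1 u u', v) p - ind (u, v) p - ind (u', v) p)" and h: "u \<in> U1" "u' \<in> U1" "v \<in> V1"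
    show ?thesis unfolding \<gamma> fm3 q using h q by (simp add: mu_add1 G3I1 mu_in nu_in)
  next
    fix u v v' assume \<gamma>: "\<gamma> = (\<lambda>p. ind (u, addV1 v v') p - ind (u, v) p - ind (u, v') p)" and h: "u \<in> U1" "v \<in> V1" "v' \<in> V1"
    show ?thesis unfolding \<gamma> fm3 q using h q by (simp add: nu_add1 G3I2 mu_in nu_in)
  next
    fix c u v assume \<gamma>: "\<gamma> = (\<lambda>p. ind (sc1 c u, v) p - c * ind (u, v) p)" and h: "u \<in> U1" "v \<in> V1"
    show ?thesis unfolding \<gamma> fm2 q using h q by (simp add: mu_sc1 G3I3 mu_in nu_in)
  next
    fix c u v assume \<gamma>: "\<gamma> = (\<lambda>p. ind (u, scV1 c v) p - c * ind (u, v) p)" and h: "u \<in> U1" "v \<in> V1"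
    show ?thesis unfolding \<gamma> fm2 q using h q by (simp add: nu_sc1 G3I4 mu_in nu_in)
  qed
qed

lemma gen_right:
  assumes "\<gamma> \<in> tgens add2 sc2 U2 addV2 scV2 V2" "q \<in> U1 \<times> V1"
  shows "fmul2 mm (ind q) \<gamma> \<in> R3"
proof -
  obtain w z where q: "q = (w, z)" "w \<in> U1" "z \<in> V1" using assms(2) by auto
  from assms(1) show ?thesis unfolding tgens_def
  proof (elim UnE CollectE exE conjE)
    fix u u' v assume \<gamma>: "\<gamma> = (\<lambda>p. ind (add2 u u', v) p - ind (u, v) p - ind (u', v) p)" and h: "u \<in> U2" "u' \<in> U2" "v \<in> V2"
    show ?thesis unfolding \<gamma> fm3r q using h q by (simp add: mu_add2 G3I1 mu_in nu_in)
  next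
    fix u v v' assume \<gamma>: "\<gamma> = (\<lambda>p. ind (u, addV2 v v') p - ind (u, v) p - ind (u, v') p)" and h: "u \<in> U2" "v \<in> V2" "v' \<in> V2"
    show ?thesis unfolding \<gamma> fm3r q using h q by (simp add: nu_add2 G3I2 mu_in nu_in)
  next
    fix c u v assume \<gamma>: "\<gamma> = (\<lambda>p. ind (sc2 c u, v) p - c * ind (u, v) p)" and h: "u \<in> U2" "v \<in> V2"
    show ?thesis unfolding \<gamma> fm2r q using h q by (simp add: mu_sc2 G3I3 mu_in nu_in)
  next
    fix c u v assume \<gamma>: "\<gamma> = (\<lambda>p. ind (u, scV2 c v) p - c * ind (u, v) p)" and h: "u \<in> U2" "v \<in> V2"
    show ?thesis unfolding \<gamma> fm2r q using h q by (simp add: nu_sc2 G3I4 mu_in nu_in)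
  qed
qed

lemma gens1_free: "\<gamma> \<in> tgens add1 sc1 U1 addV1 scV1 V1 \<Longrightarrow> \<gamma> \<in> free_on U1 V1"
  by (rule tgens_free[OF cl_add1 cl_sc1 cl_addV1 cl_scV1])
lemma gens2_free: "\<gamma> \<in> tgens add2 sc2 U2 addV2 scV2 V2 \<Longrightarrow> \<gamma> \<in> free_on U2 V2"
  by (rule tgens_free[OF cl_add2 cl_sc2 cl_addV2 cl_scV2])

lemma left_R:
  assumes "f \<in> R1" "g \<in> free_on U2 V2"
  shows "fmul2 mm f g \<in> R3"
proof -
  have fsg: "fs g" using assms(2) by (simp add: free_on_iff)
  have "fmul2 mm \<gamma> g \<in> R3" if "\<gamma> \<in> tgens add1 sc1 U1 addV1 scV1 V1" for \<gamma>
  proof -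
    have fs\<gamma>: "fs \<gamma>" using gens1_free[OF that] by (simp add: free_on_iff)
    show ?thesis
      by (rule lincombs_map[OF tensor_rels_fsub flin_fmul2_right[OF fs\<gamma>] _ fs_in_lincombs_ind[OF assms(2)]])
        (use gen_left[OF that] in auto)
  qed
  then show ?thesis
    using assms(1) unfolding tensor_rels_lincombs[of add1]
    by (intro lincombs_map[OF tensor_rels_fsub flin_fmul2_left[OF fsg]])
       (auto dest: gens1_free simp: free_on_iff)
qed

lemma right_R:
  assumes "f \<in> free_on U1 V1" "g \<in> R2"
  shows "fmul2 mm f g \<in> R3"
proof -
  have fsf: "fs f" using assms(1) by (simp add: free_on_iff)
  have "fmul2 mm f \<gamma> \<in> R3" if "\<gamma> \<in> tgens add2 sc2 U2 addV2 scV2 V2" for \<gamma>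
  proof -
    have fs\<gamma>: "fs \<gamma>" using gens2_free[OF that] by (simp add: free_on_iff)
    show ?thesis
      by (rule lincombs_map[OF tensor_rels_fsub flin_fmul2_left[OF fs\<gamma>] _ fs_in_lincombs_ind[OF assms(1)]])
        (use gen_right[OF that] in auto)
  qed
  then show ?thesis
    using assms(2) unfolding tensor_rels_lincombs[of add2]
    by (intro lincombs_map[OF tensor_rels_fsub flin_fmul2_right[OF fsf]])
       (auto dest: gens2_free simp: free_on_iff)
qed

lemma cls_prod:
  assumes f: "f \<in> free_on U1 V1" and g: "g \<in> free_on U2 V2"
  shows "tcls R3 (fmul2 mm (rep (tcls R1 f)) (rep (tcls R2 g))) = tcls R3 (fmul2 mm f g)"
proof -
  let ?f = "rep (tcls R1 f)" and ?g = "rep (tcls R2 g)"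
  have f': "?f \<in> free_on U1 V1" by (rule rep_free[OF tensor_rels_fsub R1_free f])
  have g': "?g \<in> free_on U2 V2" by (rule rep_free[OF tensor_rels_fsub R2_free g])
  have d1: "(\<lambda>p. ?f p - f p) \<in> R1" by (rule rep_tcls[OF tensor_rels_fsub])
  have d2: "(\<lambda>p. ?g p - g p) \<in> R2" by (rule rep_tcls[OF tensor_rels_fsub])
  have fs: "fs f" "fs g" "fs ?f" "fs ?g" using f g f' g' by (auto simp: free_on_iff)
  have a: "fmul2 mm (\<lambda>p. ?f p - f p) ?g \<in> R3" by (rule left_R[OF d1 g'])
  have b: "fmul2 mm f (\<lambda>p. ?g p - g p) \<in> R3" by (rule right_R[OF f d2])
  have "(\<lambda>r. fmul2 mm ?f ?g r - fmul2 mm f g r) = (\<lambda>r. fmul2 mm (\<lambda>p. ?f p - f p) ?g r + fmul2 mm f (\<lambda>p. ?g p - g p) r)"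
    using fs by (simp add: fmul2_diff_left fmul2_diff_right)
  also have "\<dots> \<in> R3" by (rule fsub_add[OF tensor_rels_fsub a b])
  finally show ?thesis by (simp add: tcls_eq_iff[OF tensor_rels_fsub])
qed

lemma prod_free: "f \<in> free_on U1 V1 \<Longrightarrow> g \<in> free_on U2 V2 \<Longrightarrow> fmul2 mm f g \<in> free_on U3 V3"
proof -
  assume f: "f \<in> free_on U1 V1" and g: "g \<in> free_on U2 V2"
  have "supp (fmul2 mm f g) \<subseteq> U3 \<times> V3"
    using supp_fmul2[of mm f g] f g mu_in nu_in by (fastforce simp: free_on_iff)
  then show ?thesis using f g by (simp add: free_on_iff)
qed

end

lemma fs_sumI: "finite F \<Longrightarrow> (\<And>q. q \<in> F \<Longrightarrow> fs (h q :: _ \<Rightarrow> 'k::comm_ring_1)) \<Longrightarrow> fs (\<lambda>p. \<Sum>q\<in>F. h q p)"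
proof (induction F rule: finite_induct)
  case (insert x F)
  have "fs (\<lambda>p. h x p + (\<Sum>q\<in>F. h q p))" using insert by (intro fs_add) auto
  then show ?case using insert by simp
qed simp

lemma flin_sum_idx:
  fixes \<Phi> :: "('p \<Rightarrow> 'k::comm_ring_1) \<Rightarrow> ('q \<Rightarrow> 'k)"
  assumes "flin \<Phi>" "finite F" "\<And>q. q \<in> F \<Longrightarrow> fs (h q)"
  shows "\<Phi> (\<lambda>p. \<Sum>q\<in>F. c q * h q p) = (\<lambda>x. \<Sum>q\<in>F. c q * \<Phi> (h q) x)"
  using assms(2,3)
proof (induction F rule: finite_induct)
  case empty
  have "\<Phi> (\<lambda>p. 0 * (0::'k)) = (\<lambda>x. 0 * \<Phi> (\<lambda>_. 0) x)" using flin_scaleD[OF assms(1) fs_0] .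
  then show ?case by simp
next
  case (insert x F)
  have fsF: "fs (\<lambda>p. \<Sum>q\<in>F. c q * h q p)" using insert by (intro fs_sumI) auto
  have "\<Phi> (\<lambda>p. \<Sum>q\<in>insert x F. c q * h q p) = \<Phi> (\<lambda>p. (\<lambda>p. c x * h x p) p + (\<lambda>p. \<Sum>q\<in>F. c q * h q p) p)"
    using insert by simp
  also have "\<dots> = (\<lambda>y. \<Phi> (\<lambda>p. c x * h x p) y + \<Phi> (\<lambda>p. \<Sum>q\<in>F. c q * h q p) y)"
    using insert fsF by (intro flin_addD[OF assms(1)]) auto
  also have "\<dots> = (\<lambda>y. c x * \<Phi> (h x) y + (\<Sum>q\<in>F. c q * \<Phi> (h q) y))"
    using insert flin_scaleD[OF assms(1)] by simp
  finally show ?case using insert by simp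
qed

lemma flin_ext:
  fixes \<Phi> :: "('p \<Rightarrow> 'k::comm_ring_1) \<Rightarrow> ('q \<Rightarrow> 'k)"
  assumes "flin \<Phi>" "flin \<Psi>" "\<And>p. \<Phi> (ind p) = \<Psi> (ind p)" "fs f"
  shows "\<Phi> f = \<Psi> f"
proof -
  have fin: "finite (supp f)" using assms(4) by (simp add: fs_def)
  have "\<Phi> f = \<Phi> (\<lambda>p. \<Sum>q\<in>supp f. f q * ind q p)" by (subst fs_decomp[OF assms(4)]) (rule refl)
  also have "\<dots> = (\<lambda>x. \<Sum>q\<in>supp f. f q * \<Phi> (ind q) x)" by (rule flin_sum_idx[OF assms(1) fin]) simp
  also have "\<dots> = (\<lambda>x. \<Sum>q\<in>supp f. f q * \<Psi> (ind q) x)" by (simp add: assms(3))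
  also have "\<dots> = \<Psi> (\<lambda>p. \<Sum>q\<in>supp f. f q * ind q p)" by (rule flin_sum_idx[OF assms(2) fin, symmetric]) simp
  also have "\<dots> = \<Psi> f" by (subst (2) fs_decomp[OF assms(4)]) (rule refl)
  finally show ?thesis .
qed

lemma flin_comp: "flin \<Phi> \<Longrightarrow> flin \<Psi> \<Longrightarrow> (\<And>f. fs f \<Longrightarrow> fs (\<Phi> f)) \<Longrightarrow> flin (\<lambda>f. \<Psi> (\<Phi> f))"
  unfolding flin_def by simp

lemma tcarrier_induct:
  fixes R :: "('u \<times> 'v \<Rightarrow> 'k::comm_ring_1) set"
  assumes R: "fsub R" and X: "X \<in> tcarrier R U V"
    and z: "P (tzero R)"
    and t: "\<And>u v. u \<in> U \<Longrightarrow> v \<in> V \<Longrightarrow> P (tmk R u v)"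
    and a: "\<And>X Y. X \<in> tcarrier R U V \<Longrightarrow> Y \<in> tcarrier R U V \<Longrightarrow> P X \<Longrightarrow> P Y \<Longrightarrow> P (tadd R X Y)"
    and s: "\<And>c X. X \<in> tcarrier R U V \<Longrightarrow> P X \<Longrightarrow> P (tscale R c X)"
  shows "P X"
proof -
  obtain f where f: "f \<in> free_on U V" "X = tcls R f" using X by (rule tcarrier_cases)
  have fs: "fs f" and sf: "supp f \<subseteq> U \<times> V" using f by (auto simp: free_on_iff)
  have "P (tcls R (\<lambda>p. \<Sum>q\<in>F. f q * ind q p)) \<and> (\<lambda>p. \<Sum>q\<in>F. f q * ind q p) \<in> free_on U V"
    if "finite F" "F \<subseteq> supp f" for F
    using that
  proof (induction F rule: finite_induct)
    case empty
    then show ?case using z by (simp add: tzero_def free_on_0)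
  next
    case (insert x F)
    obtain u v where x: "x = (u, v)" "u \<in> U" "v \<in> V" using insert sf by auto
    have IH: "P (tcls R (\<lambda>p. \<Sum>q\<in>F. f q * ind q p))" "(\<lambda>p. \<Sum>q\<in>F. f q * ind q p) \<in> free_on U V"
      using insert by auto
    have fr: "(\<lambda>p. f x * ind x p + (\<Sum>q\<in>F. f q * ind q p)) \<in> free_on U V"
      using IH x free_on_ind[of u v U V] by (intro free_on_add free_on_scale) auto
    have e: "tcls R (\<lambda>p. \<Sum>q\<in>insert x F. f q * ind q p) =
        tadd R (tscale R (f x) (tmk R u v)) (tcls R (\<lambda>p. \<Sum>q\<in>F. f q * ind q p))"
      using insert by (simp add: tmk_def tscale_cls[OF R] tadd_cls[OF R] x)
    have "P (tadd R (tscale R (f x) (tmk R u v)) (tcls R (\<lambda>p. \<Sum>q\<in>F. f q * ind q p)))"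
    proof (rule a)
      show "tscale R (f x) (tmk R u v) \<in> tcarrier R U V"
        unfolding tmk_def tscale_cls[OF R] using x by (intro tcarrier_I free_on_scale free_on_ind) auto
      show "tcls R (\<lambda>p. \<Sum>q\<in>F. f q * ind q p) \<in> tcarrier R U V" using IH by (intro tcarrier_I)
      show "P (tscale R (f x) (tmk R u v))"
        using x by (intro s t) (auto simp: tmk_def intro!: tcarrier_I free_on_ind)
    qed (use IH in auto)
    then show ?case using e fr insert by simp
  qed
  from this[of "supp f"] show ?thesis using fs f by (simp add: fs_def fs_decomp[symmetric])
qed

definition liftf :: "('p \<Rightarrow> ('r \<Rightarrow> 'k) set) \<Rightarrow> ('p \<Rightarrow> 'k::comm_ring_1) \<Rightarrow> ('r \<Rightarrow> 'k)" where
  "liftf \<beta> f = (\<lambda>r. \<Sum>p\<in>supp f. f p * rep (\<beta> p) r)"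

lemma liftf_sum: "finite P \<Longrightarrow> supp f \<subseteq> P \<Longrightarrow> liftf \<beta> f r = (\<Sum>p\<in>P. f p * rep (\<beta> p) r)"
  unfolding liftf_def by (rule sum.mono_neutral_left) (auto simp: supp_def)

lemma flin_liftf: "flin (liftf \<beta>)"
  unfolding flin_def
proof (intro conjI allI impI)
  fix f g :: "'a \<Rightarrow> 'b" assume "fs f" "fs g"
  then have fin: "finite (supp f \<union> supp g)" by (simp add: fs_def)
  show "liftf \<beta> (\<lambda>p. f p + g p) = (\<lambda>x. liftf \<beta> f x + liftf \<beta> g x)"
  proof
    fix x
    show "liftf \<beta> (\<lambda>p. f p + g p) x = liftf \<beta> f x + liftf \<beta> g x"
      using fin supp_add_sub[of f g]
      by (simp add: liftf_sum[OF fin] distrib_right sum.distrib)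
  qed
next
  fix f :: "'a \<Rightarrow> 'b" and c assume "fs f"
  then have fin: "finite (supp f)" by (simp add: fs_def)
  show "liftf \<beta> (\<lambda>p. c * f p) = (\<lambda>x. c * liftf \<beta> f x)"
  proof
    fix x
    show "liftf \<beta> (\<lambda>p. c * f p) x = c * liftf \<beta> f x"
      using fin supp_scale_sub[of c f]
      by (simp add: liftf_sum[OF fin] sum_distrib_left mult.assoc)
  qed
qed

lemma liftf_ind: "liftf \<beta> (ind q) = rep (\<beta> q)"
  by (rule ext) (simp add: liftf_sum[of "{q}"] ind_def)

lemma fs_liftf:
  assumes "fs f" "\<And>p. p \<in> supp f \<Longrightarrow> rep (\<beta> p) \<in> free_on U V"
  shows "liftf \<beta> f \<in> free_on U V"
proof -
  have "(\<lambda>r. \<Sum>p\<in>F. f p * rep (\<beta> p) r) \<in> free_on U V" if "finite F" "F \<subseteq> supp f" for F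
    using that
  proof (induction F rule: finite_induct)
    case empty then show ?case by (simp add: free_on_0)
  next
    case (insert x F)
    then have "(\<lambda>r. f x * rep (\<beta> x) r + (\<Sum>p\<in>F. f p * rep (\<beta> p) r)) \<in> free_on U V"
      using assms by (intro free_on_add free_on_scale) auto
    then show ?case using insert by simp
  qed
  then show ?thesis using assms by (simp add: liftf_def fs_def)
qed

locale tlift =
  fixes addU :: "'u \<Rightarrow> 'u \<Rightarrow> 'u" and scU :: "'k::field \<Rightarrow> 'u \<Rightarrow> 'u" and U
    and addV :: "'v \<Rightarrow> 'v \<Rightarrow> 'v" and scV :: "'k \<Rightarrow> 'v \<Rightarrow> 'v" and V
    and R' :: "('w \<Rightarrow> 'k) set" and C' :: "('w \<Rightarrow> 'k) set set" and FR :: "('w \<Rightarrow> 'k) set"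
    and \<beta> :: "'u \<times> 'v \<Rightarrow> ('w \<Rightarrow> 'k) set"
  assumes R'_fsub: "fsub R'"
    and C'_def: "C' = tcls R' ` FR"
    and R'_FR: "R' \<subseteq> FR"
    and FR_add: "\<And>f g. f \<in> FR \<Longrightarrow> g \<in> FR \<Longrightarrow> (\<lambda>p. f p + g p) \<in> FR"
    and FR_scale: "\<And>f c. f \<in> FR \<Longrightarrow> (\<lambda>p. c * f p) \<in> FR"
    and FR_0: "(\<lambda>_. 0) \<in> FR"
    and cl_addU: "\<And>u u'. u \<in> U \<Longrightarrow> u' \<in> U \<Longrightarrow> addU u u' \<in> U"
    and cl_scU: "\<And>c u. u \<in> U \<Longrightarrow> scU c u \<in> U"
    and cl_addV: "\<And>u u'. u \<in> V \<Longrightarrow> u' \<in> V \<Longrightarrow> addV u u' \<in> V"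
    and cl_scV: "\<And>c u. u \<in> V \<Longrightarrow> scV c u \<in> V"
    and beta_in: "\<And>u v. u \<in> U \<Longrightarrow> v \<in> V \<Longrightarrow> \<beta> (u, v) \<in> C'"
    and beta_add1: "\<And>u u' v. u \<in> U \<Longrightarrow> u' \<in> U \<Longrightarrow> v \<in> V \<Longrightarrow> \<beta> (addU u u', v) = tadd R' (\<beta> (u, v)) (\<beta> (u', v))"
    and beta_add2: "\<And>u v v'. u \<in> U \<Longrightarrow> v \<in> V \<Longrightarrow> v' \<in> V \<Longrightarrow> \<beta> (u, addV v v') = tadd R' (\<beta> (u, v)) (\<beta> (u, v'))"
    and beta_sc1: "\<And>c u v. u \<in> U \<Longrightarrow> v \<in> V \<Longrightarrow> \<beta> (scU c u, v) = tscale R' c (\<beta> (u, v))"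
    and beta_sc2: "\<And>c u v. u \<in> U \<Longrightarrow> v \<in> V \<Longrightarrow> \<beta> (u, scV c v) = tscale R' c (\<beta> (u, v))"
begin

abbreviation "R \<equiv> tensor_rels addU scU U addV scV V"

definition lift where "lift X = tcls R' (liftf \<beta> (rep X))"

lemma rep_in_FR: "X \<in> C' \<Longrightarrow> rep X \<in> FR"
proof -
  assume "X \<in> C'"
  then obtain f where f: "f \<in> FR" "X = tcls R' f" using C'_def by auto
  have "(\<lambda>p. f p + (rep (tcls R' f) p - f p)) \<in> FR"
    using f rep_tcls[OF R'_fsub, of f] R'_FR by (intro FR_add) auto
  then show ?thesis using f by simp
qed

lemma rep_diff: "(\<lambda>r. rep (tcls R' f) r - f r) \<in> R'" by (rule rep_tcls[OF R'_fsub])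

lemma gen_ok:
  assumes "\<gamma> \<in> tgens addU scU U addV scV V"
  shows "liftf \<beta> \<gamma> \<in> R'"
proof -
  have lin: "liftf \<beta> (\<lambda>p. ind a p - ind b p - ind c p) = (\<lambda>r. rep (\<beta> a) r - rep (\<beta> b) r - rep (\<beta> c) r)"
    "liftf \<beta> (\<lambda>p. ind a p - e * ind b p) = (\<lambda>r. rep (\<beta> a) r - e * rep (\<beta> b) r)" for a b c e
  proof -
    have d: "liftf \<beta> (\<lambda>p. f p - g p) = (\<lambda>r. liftf \<beta> f r - liftf \<beta> g r)" if "fs f" "fs g" for f g
    proof -
      have "liftf \<beta> (\<lambda>p. f p + (\<lambda>p. (-1) * g p) p) = (\<lambda>r. liftf \<beta> f r + liftf \<beta> (\<lambda>p. (-1) * g p) r)"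
        by (rule flin_addD[OF flin_liftf that(1) fs_scale[OF that(2)]])
      then show ?thesis using flin_scaleD[OF flin_liftf that(2), of \<beta> "-1"] by simp
    qed
    show "liftf \<beta> (\<lambda>p. ind a p - ind b p - ind c p) = (\<lambda>r. rep (\<beta> a) r - rep (\<beta> b) r - rep (\<beta> c) r)"
      by (simp add: d liftf_ind)
    show "liftf \<beta> (\<lambda>p. ind a p - e * ind b p) = (\<lambda>r. rep (\<beta> a) r - e * rep (\<beta> b) r)"
      by (simp add: d liftf_ind flin_scaleD[OF flin_liftf])
  qed
  have addcase: "(\<lambda>r. rep (tadd R' X Y) r - rep X r - rep Y r) \<in> R'" for X Y
    using rep_diff[of "\<lambda>p. rep X p + rep Y p"] unfolding tadd_def by (simp add: diff_diff_add)
  have sccase: "(\<lambda>r. rep (tscale R' e X) r - e * rep X r) \<in> R'" for X e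
    using rep_diff[of "\<lambda>p. e * rep X p"] unfolding tscale_def by simp
  from assms show ?thesis unfolding tgens_def
  proof (elim UnE CollectE exE conjE)
    fix u u' v assume \<gamma>: "\<gamma> = (\<lambda>p. ind (addU u u', v) p - ind (u, v) p - ind (u', v) p)" and h: "u \<in> U" "u' \<in> U" "v \<in> V"
    show ?thesis unfolding \<gamma> lin using h addcase by (simp add: beta_add1)
  next
    fix u v v' assume \<gamma>: "\<gamma> = (\<lambda>p. ind (u, addV v v') p - ind (u, v) p - ind (u, v') p)" and h: "u \<in> U" "v \<in> V" "v' \<in> V"
    show ?thesis unfolding \<gamma> lin using h addcase by (simp add: beta_add2)
  next
    fix c u v assume \<gamma>: "\<gamma> = (\<lambda>p. ind (scU c u, v) p - c * ind (u, v) p)" and h: "u \<in> U" "v \<in> V"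
    show ?thesis unfolding \<gamma> lin using h sccase by (simp add: beta_sc1)
  next
    fix c u v assume \<gamma>: "\<gamma> = (\<lambda>p. ind (u, scV c v) p - c * ind (u, v) p)" and h: "u \<in> U" "v \<in> V"
    show ?thesis unfolding \<gamma> lin using h sccase by (simp add: beta_sc2)
  qed
qed

lemma liftf_R: "f \<in> R \<Longrightarrow> liftf \<beta> f \<in> R'"
  unfolding tensor_rels_lincombs
proof (rule lincombs_map[OF R'_fsub flin_liftf])
  fix g assume g: "g \<in> tgens addU scU U addV scV V"
  have "g \<in> free_on U V" by (rule tgens_free[OF cl_addU cl_scU cl_addV cl_scV g])
  then show "fs g \<and> liftf \<beta> g \<in> R'" using gen_ok[OF g] by (simp add: free_on_iff)
qed

lemma R_free: "R \<subseteq> free_on U V"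
  using tensor_rels_free[where addU=addU and scU=scU and U=U and addV=addV and scV=scV and V=V, OF cl_addU cl_scU cl_addV cl_scV] by blast

lemma lift_cls: assumes "f \<in> free_on U V" shows "lift (tcls R f) = tcls R' (liftf \<beta> f)"
proof -
  let ?g = "rep (tcls R f)"
  have g: "?g \<in> free_on U V" by (rule rep_free[OF tensor_rels_fsub R_free assms])
  have d: "(\<lambda>p. ?g p - f p) \<in> R" by (rule rep_tcls[OF tensor_rels_fsub])
  have fs: "fs f" "fs ?g" using assms g by (auto simp: free_on_iff)
  have "liftf \<beta> (\<lambda>p. ?g p + (\<lambda>p. (-1) * f p) p) = (\<lambda>r. liftf \<beta> ?g r + liftf \<beta> (\<lambda>p. (-1) * f p) r)"
    by (rule flin_addD[OF flin_liftf fs(2) fs_scale[OF fs(1)]])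
  then have "liftf \<beta> (\<lambda>p. ?g p - f p) = (\<lambda>r. liftf \<beta> ?g r - liftf \<beta> f r)"
    using flin_scaleD[OF flin_liftf fs(1), of \<beta> "-1"] by simp
  with liftf_R[OF d] show ?thesis unfolding lift_def by (simp add: tcls_eq_iff[OF R'_fsub])
qed

lemma liftf_FR: assumes "f \<in> free_on U V" shows "liftf \<beta> f \<in> FR"
proof -
  have fs: "fs f" and s: "supp f \<subseteq> U \<times> V" using assms by (auto simp: free_on_iff)
  have "(\<lambda>r. \<Sum>p\<in>F. f p * rep (\<beta> p) r) \<in> FR" if "finite F" "F \<subseteq> supp f" for F
    using that
  proof (induction F rule: finite_induct)
    case empty then show ?case using FR_0 by simp
  next
    case (insert x F)
    obtain u v where x: "x = (u, v)" "u \<in> U" "v \<in> V" using insert s by auto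
    then have "(\<lambda>r. f x * rep (\<beta> x) r + (\<Sum>p\<in>F. f p * rep (\<beta> p) r)) \<in> FR"
      using insert rep_in_FR[OF beta_in[OF x(2,3)]] by (intro FR_add FR_scale) auto
    then show ?case using insert by simp
  qed
  then show ?thesis using fs by (simp add: liftf_def fs_def)
qed

lemma lift_in: "f \<in> free_on U V \<Longrightarrow> lift (tcls R f) \<in> C'"
  unfolding lift_cls C'_def by (rule imageI, rule liftf_FR)

lemma lift_tmk: "u \<in> U \<Longrightarrow> v \<in> V \<Longrightarrow> lift (tmk R u v) = \<beta> (u, v)"
proof -
  assume uv: "u \<in> U" "v \<in> V"
  obtain g where g: "\<beta> (u, v) = tcls R' g" using beta_in[OF uv] C'_def by auto
  have "lift (tmk R u v) = tcls R' (rep (\<beta> (u, v)))"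
    unfolding tmk_def using uv by (simp add: lift_cls free_on_ind liftf_ind)
  also have "\<dots> = \<beta> (u, v)" unfolding g by (rule tcls_rep[OF R'_fsub])
  finally show ?thesis .
qed

lemma lift_add: assumes "f \<in> free_on U V" "g \<in> free_on U V" shows
   "lift (tadd R (tcls R f) (tcls R g)) = tadd R' (lift (tcls R f)) (lift (tcls R g))"
proof -
  have fs: "fs f" "fs g" using assms by (auto simp: free_on_iff)
  show ?thesis
    unfolding tadd_cls[OF tensor_rels_fsub] tadd_cls[OF R'_fsub] lift_cls[OF assms(1)] lift_cls[OF assms(2)]
      lift_cls[OF free_on_add[OF assms]] flin_addD[OF flin_liftf fs] ..
qed

lemma lift_scale: assumes "f \<in> free_on U V" shows
   "lift (tscale R c (tcls R f)) = tscale R' c (lift (tcls R f))"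
proof -
  have fs: "fs f" using assms by (auto simp: free_on_iff)
  show ?thesis
    unfolding tscale_cls[OF tensor_rels_fsub] tscale_cls[OF R'_fsub] lift_cls[OF assms(1)]
      lift_cls[OF free_on_scale[OF assms]] flin_scaleD[OF flin_liftf fs] ..
qed

end

locale L22 =
  fixes sA :: "'k::field \<Rightarrow> 'a::ab_group_add \<Rightarrow> 'a"
    and mA :: "'a \<Rightarrow> 'a \<Rightarrow> 'a"
    and sS :: "'k \<Rightarrow> 's::comm_ring_1 \<Rightarrow> 's"
  assumes vsA: "vector_space sA"
    and bilin1: "\<And>x y z. mA (x + y) z = mA x z + mA y z"
    and bilin2: "\<And>x y z. mA x (y + z) = mA x y + mA x z"
    and bilin3: "\<And>c x y. mA (sA c x) y = sA c (mA x y)"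
    and bilin4: "\<And>c x y. mA x (sA c y) = sA c (mA x y)"
    and vsS: "vector_space sS"
    and algS: "\<And>c x y. sS c (x * y) = sS c x * y"
begin

lemma sA_add: "sA c (x + y) = sA c x + sA c y" using vector_space.vector_space_assms(1)[OF vsA] .
lemma sA_sA: "sA c (sA e x) = sA (c * e) x" using vector_space.vector_space_assms(3)[OF vsA] .
lemma sA_comm: "sA c (sA e x) = sA e (sA c x)" by (simp add: sA_sA mult.commute)
lemma sS_add: "sS c (x + y) = sS c x + sS c y" using vector_space.vector_space_assms(1)[OF vsS] .
lemma sS_mult2: "x * sS c y = sS c (x * y)" by (metis algS mult.commute)

lemma CA_iff: "g \<in> CA sA mA \<longleftrightarrow> (\<forall>x y. g (x + y) = g x + g y) \<and> (\<forall>c x. g (sA c x) = sA c (g x)) \<and>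
   (\<forall>x y. g (mA x y) = mA (g x) y \<and> g (mA x y) = mA x (g y))"
  by (simp add: CA_def centroid_on_def lin_on_def extensional_def)

lemma CA_add: "g \<in> CA sA mA \<Longrightarrow> g (x + y) = g x + g y" unfolding CA_iff by blast
lemma CA_sc: "g \<in> CA sA mA \<Longrightarrow> g (sA c x) = sA c (g x)" unfolding CA_iff by blast
lemma CA_m1: "g \<in> CA sA mA \<Longrightarrow> g (mA x y) = mA (g x) y" unfolding CA_iff by blast
lemma CA_m2: "g \<in> CA sA mA \<Longrightarrow> g (mA x y) = mA x (g y)" unfolding CA_iff by blast
lemma CA_I: "(\<And>x y. g (x + y) = g x + g y) \<Longrightarrow> (\<And>c x. g (sA c x) = sA c (g x)) \<Longrightarrow>
   (\<And>x y. g (mA x y) = mA (g x) y) \<Longrightarrow> (\<And>x y. g (mA x y) = mA x (g y)) \<Longrightarrow> g \<in> CA sA mA"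
  unfolding CA_iff by blast

lemma CA_cl_add: assumes "g \<in> CA sA mA" "h \<in> CA sA mA" shows "(\<lambda>x. g x + h x) \<in> CA sA mA"
proof (rule CA_I)
  fix x y e
  show "g (x + y) + h (x + y) = (g x + h x) + (g y + h y)" by (simp add: CA_add[OF assms(1)] CA_add[OF assms(2)] ac_simps)
  show "g (sA e x) + h (sA e x) = sA e (g x + h x)" by (simp add: CA_sc[OF assms(1)] CA_sc[OF assms(2)] sA_add)
  show "g (mA x y) + h (mA x y) = mA (g x + h x) y" by (simp add: CA_m1[OF assms(1)] CA_m1[OF assms(2)] bilin1)
  show "g (mA x y) + h (mA x y) = mA x (g y + h y)" by (simp add: CA_m2[OF assms(1)] CA_m2[OF assms(2)] bilin2)
qed
lemma CA_cl_sc: assumes "g \<in> CA sA mA" shows "(\<lambda>x. sA c (g x)) \<in> CA sA mA"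
proof (rule CA_I)
  fix x y e
  show "sA c (g (x + y)) = sA c (g x) + sA c (g y)" by (simp add: CA_add[OF assms] sA_add)
  show "sA c (g (sA e x)) = sA e (sA c (g x))" by (simp add: CA_sc[OF assms] sA_comm)
  show "sA c (g (mA x y)) = mA (sA c (g x)) y" by (simp add: CA_m1[OF assms] bilin3)
  show "sA c (g (mA x y)) = mA x (sA c (g y))" by (simp add: CA_m2[OF assms] bilin4)
qed
lemma CA_id: "id \<in> CA sA mA" by (rule CA_I) simp_all
lemma CA_comp: assumes "g \<in> CA sA mA" "h \<in> CA sA mA" shows "g \<circ> h \<in> CA sA mA"
proof (rule CA_I)
  fix x y e
  show "(g \<circ> h) (x + y) = (g \<circ> h) x + (g \<circ> h) y" by (simp add: CA_add[OF assms(1)] CA_add[OF assms(2)])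
  show "(g \<circ> h) (sA e x) = sA e ((g \<circ> h) x)" by (simp add: CA_sc[OF assms(1)] CA_sc[OF assms(2)])
  show "(g \<circ> h) (mA x y) = mA ((g \<circ> h) x) y" by (simp add: CA_m1[OF assms(1)] CA_m1[OF assms(2)])
  show "(g \<circ> h) (mA x y) = mA x ((g \<circ> h) y)" by (simp add: CA_m2[OF assms(1)] CA_m2[OF assms(2)])
qed

sublocale AS: tprod "(+)" sA UNIV "(+)" sS UNIV "(+)" sA UNIV "(+)" sS UNIV "(+)" sA UNIV "(+)" sS UNIV mA "(*)"
  by unfold_locales (auto simp: bilin1 bilin2 bilin3 bilin4 distrib_right distrib_left algS sS_mult2)

sublocale CS: tprod "\<lambda>g g' x. g x + g' x" "\<lambda>c g x. sA c (g x)" "CA sA mA" "(+)" sS UNIV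
   "\<lambda>g g' x. g x + g' x" "\<lambda>c g x. sA c (g x)" "CA sA mA" "(+)" sS UNIV
   "\<lambda>g g' x. g x + g' x" "\<lambda>c g x. sA c (g x)" "CA sA mA" "(+)" sS UNIV "(\<circ>)" "(*)"
  by unfold_locales
     (auto simp: CA_cl_add CA_cl_sc CA_comp distrib_right distrib_left algS sS_mult2 CA_add CA_sc fun_eq_iff)

sublocale PS: tprod "\<lambda>g g' x. g x + g' x" "\<lambda>c g x. sA c (g x)" "CA sA mA" "(+)" sS UNIV
   "(+)" sA UNIV "(+)" sS UNIV "(+)" sA UNIV "(+)" sS UNIV "\<lambda>g a. g a" "(*)"
  by unfold_locales
     (auto simp: CA_cl_add CA_cl_sc distrib_right distrib_left algS sS_mult2 CA_add CA_sc)

abbreviation "R \<equiv> rels_AS sA sS"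
abbreviation "T \<equiv> TAS sA sS"
abbreviation "RC \<equiv> rels_CS sA mA sS"
abbreviation "TC \<equiv> TCS sA mA sS"
abbreviation "ad \<equiv> tadd R"
abbreviation "sc \<equiv> tscale R"
abbreviation "mu \<equiv> mulAS sA sS mA"
abbreviation "tz \<equiv> tzero R"
abbreviation "adc \<equiv> tadd RC"
abbreviation "scc \<equiv> tscale RC"
abbreviation "muc \<equiv> mulCS sA mA sS"
abbreviation "\<psi> \<equiv> psi sA mA sS"
abbreviation "tm \<equiv> tmk R"
abbreviation "tmc \<equiv> tmk RC"

definition "sub X Y = ad X (sc (-1) Y)"

lemma R_fsub: "fsub R" unfolding rels_AS_def by (rule tensor_rels_fsub)
lemma RC_fsub: "fsub RC" unfolding rels_CS_def by (rule tensor_rels_fsub)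

lemma free_UNIV: "free_on UNIV UNIV = {f. fs f}" by (auto simp: free_on_iff)

lemma T_eq: "T = tcls R ` {f. fs f}" by (simp add: TAS_def tcarrier_def free_UNIV)
lemma TC_eq: "TC = tcls RC ` free_on (CA sA mA) UNIV" by (simp add: TCS_def tcarrier_def)

lemma T_cases: "X \<in> T \<Longrightarrow> (\<And>f. fs f \<Longrightarrow> X = tcls R f \<Longrightarrow> thesis) \<Longrightarrow> thesis"
  unfolding T_eq by blast
lemma TC_cases: "X \<in> TC \<Longrightarrow> (\<And>f. f \<in> free_on (CA sA mA) UNIV \<Longrightarrow> X = tcls RC f \<Longrightarrow> thesis) \<Longrightarrow> thesis"
  unfolding TC_eq by blast
lemma T_I: "fs f \<Longrightarrow> tcls R f \<in> T" unfolding T_eq by blast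
lemma TC_I: "f \<in> free_on (CA sA mA) UNIV \<Longrightarrow> tcls RC f \<in> TC" unfolding TC_eq by blast

lemma add_cls: "ad (tcls R f) (tcls R g) = tcls R (\<lambda>p. f p + g p)" by (rule tadd_cls[OF R_fsub])
lemma sc_cls: "sc c (tcls R f) = tcls R (\<lambda>p. c * f p)" by (rule tscale_cls[OF R_fsub])
lemma sub_cls: "sub (tcls R f) (tcls R g) = tcls R (\<lambda>p. f p - g p)"
  by (simp add: sub_def add_cls sc_cls)
lemma tz_cls: "tz = tcls R (\<lambda>_. 0)" by (simp add: tzero_def)
lemma addc_cls: "adc (tcls RC f) (tcls RC g) = tcls RC (\<lambda>p. f p + g p)" by (rule tadd_cls[OF RC_fsub])
lemma scc_cls: "scc c (tcls RC f) = tcls RC (\<lambda>p. c * f p)" by (rule tscale_cls[OF RC_fsub])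

lemma mu_cls: "fs f \<Longrightarrow> fs g \<Longrightarrow> mu (tcls R f) (tcls R g) = tcls R (fmul2 AS.mm f g)"
  unfolding mulAS_def rels_AS_def using AS.cls_prod by (simp add: free_UNIV)

lemma muc_cls: "f \<in> free_on (CA sA mA) UNIV \<Longrightarrow> g \<in> free_on (CA sA mA) UNIV \<Longrightarrow>
  muc (tcls RC f) (tcls RC g) = tcls RC (fmul2 CS.mm f g)"
  unfolding mulCS_def rels_CS_def by (rule CS.cls_prod)

lemma psi_cls: "f \<in> free_on (CA sA mA) UNIV \<Longrightarrow> fs g \<Longrightarrow>
  \<psi> (tcls RC f) (tcls R g) = tcls R (fmul2 PS.mm f g)"
  unfolding psi_def using T_I[of g] PS.cls_prod[of f g]
  by (simp add: free_UNIV rels_CS_def rels_AS_def)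

lemma tm_cls: "tm a s = tcls R (ind (a, s))" by (simp add: tmk_def)
lemma tmc_cls: "tmc g s = tcls RC (ind (g, s))" by (simp add: tmk_def)

end

context L22 begin

lemma cls_cong: "(\<And>p. F p = G p) \<Longrightarrow> tcls R F = tcls R G" by (rule arg_cong[where f="tcls R"]) (rule ext)

lemmas cls_simps = add_cls sc_cls sub_cls mu_cls tz_cls fmul2_add_left fmul2_add_right fmul2_scale_left
  fmul2_scale_right fmul2_diff_left fmul2_diff_right

lemma T_add: "a \<in> T \<Longrightarrow> b \<in> T \<Longrightarrow> ad a b \<in> T"
  by (elim T_cases) (simp add: add_cls T_I)
lemma T_sc: "a \<in> T \<Longrightarrow> sc k a \<in> T"
  by (elim T_cases) (simp add: sc_cls T_I)
lemma T_sub: "a \<in> T \<Longrightarrow> b \<in> T \<Longrightarrow> sub a b \<in> T"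
  by (elim T_cases) (simp add: sub_cls T_I)
lemma T_mu: "a \<in> T \<Longrightarrow> b \<in> T \<Longrightarrow> mu a b \<in> T"
  by (elim T_cases) (simp add: mu_cls T_I)
lemma T_tz: "tz \<in> T" by (simp add: tz_cls T_I)
lemma T_tm: "tm a s \<in> T" by (simp add: tm_cls T_I)
lemma sc0: "sc 0 a = tz" by (simp add: tscale_def tzero_def)

lemma I1: assumes "a \<in> T" "b \<in> T" "c \<in> T" "e \<in> T"
  shows "sub (ad a b) (ad c e) = ad (sub a c) (sub b e)"
  using assms by (elim T_cases) (simp add: cls_simps, rule cls_cong, simp add: algebra_simps)

lemma I2: assumes "a \<in> T" "b \<in> T" "c \<in> T" "e \<in> T" "g \<in> T"
  shows "sub (ad (mu a c) (mu b e)) (ad (mu g c) (mu b e)) = mu (sub a g) c"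
  using assms by (elim T_cases) (simp add: cls_simps)

lemma I3: assumes "a \<in> T" "x \<in> T" "c \<in> T" "e \<in> T" "g \<in> T"
  shows "sub (ad (mu e c) (mu x a)) (ad (mu e c) (mu x g)) = mu x (sub a g)"
  using assms by (elim T_cases) (simp add: cls_simps)

lemma I4: assumes "a \<in> T" "b \<in> T"
  shows "sub (sc k a) (sc k b) = sc k (sub a b)"
  using assms by (elim T_cases) (simp add: cls_simps, rule cls_cong, simp add: algebra_simps)

lemma I5: assumes "a \<in> T" "b \<in> T" "c \<in> T"
  shows "ad (sub a b) (sub b c) = sub a c"
  using assms by (elim T_cases) (simp add: cls_simps)

lemma I6: assumes "a \<in> T" shows "sub a tz = a"
  using assms by (elim T_cases) (simp add: cls_simps)

lemma I7: assumes "a \<in> T" "ad a a = a" shows "a = tz"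
proof -
  obtain f where f: "fs f" "a = tcls R f" using assms(1) by (rule T_cases)
  have "tcls R (\<lambda>p. f p + f p) = tcls R f" using assms(2) f by (simp add: add_cls)
  then have "(\<lambda>p. (f p + f p) - f p) \<in> R" by (simp add: tcls_eq_iff[OF R_fsub])
  then have "(\<lambda>p. f p - 0) \<in> R" by simp
  then show ?thesis using f by (simp add: tz_cls tcls_eq_iff[OF R_fsub])
qed

lemma I8: assumes "a \<in> T" "b \<in> T" shows "sub (ad a b) b = a"
  using assms by (elim T_cases) (simp add: cls_simps)

lemma I9: assumes "a \<in> T" "b \<in> T" "c \<in> T" "e \<in> T"
  shows "ad (ad a b) (ad c e) = ad (ad a c) (ad b e)"
  using assms by (elim T_cases) (simp add: cls_simps, rule cls_cong, simp add: algebra_simps)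

lemma I10: assumes "a \<in> T" "b \<in> T"
  shows "sc k (ad a b) = ad (sc k a) (sc k b)"
  using assms by (elim T_cases) (simp add: cls_simps, rule cls_cong, simp add: algebra_simps)

lemma mu_add_l: assumes "a \<in> T" "b \<in> T" "c \<in> T" shows "mu (ad a b) c = ad (mu a c) (mu b c)"
  using assms by (elim T_cases) (simp add: cls_simps)
lemma mu_add_r: assumes "a \<in> T" "b \<in> T" "c \<in> T" shows "mu c (ad a b) = ad (mu c a) (mu c b)"
  using assms by (elim T_cases) (simp add: cls_simps)
lemma mu_sc_l: assumes "a \<in> T" "c \<in> T" shows "mu (sc k a) c = sc k (mu a c)"
  using assms by (elim T_cases) (simp add: cls_simps)
lemma mu_sc_r: assumes "a \<in> T" "c \<in> T" shows "mu c (sc k a) = sc k (mu c a)"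
  using assms by (elim T_cases) (simp add: cls_simps)

lemma mu_tm: "mu (tm a s) (tm b t) = tm (mA a b) (s * t)"
  by (simp add: tm_cls mu_cls fmul2_ind)

end

context L22 begin

lemma fs_CA: "f \<in> free_on (CA sA mA) UNIV \<Longrightarrow> fs f" by (simp add: free_on_iff)

lemma T_psi: "X \<in> TC \<Longrightarrow> Z \<in> T \<Longrightarrow> \<psi> X Z \<in> T"
  by (elim TC_cases T_cases) (simp add: psi_cls T_I fs_CA)

lemma psi_ext: "\<psi> X \<in> extensional T" by (simp add: psi_def)

lemma psi_adc: "X \<in> TC \<Longrightarrow> Y \<in> TC \<Longrightarrow> Z \<in> T \<Longrightarrow> \<psi> (adc X Y) Z = ad (\<psi> X Z) (\<psi> Y Z)"
  by (elim TC_cases T_cases) (simp add: psi_cls addc_cls add_cls free_on_add fs_CA fmul2_add_left)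

lemma psi_scc: "X \<in> TC \<Longrightarrow> Z \<in> T \<Longrightarrow> \<psi> (scc c X) Z = sc c (\<psi> X Z)"
  by (elim TC_cases T_cases) (simp add: psi_cls scc_cls sc_cls free_on_scale fs_CA fmul2_scale_left)

lemma assoc_ind:
  "fmul2 PS.mm (fmul2 CS.mm (ind p) (ind q)) (ind r) = (fmul2 PS.mm (ind p) (fmul2 PS.mm (ind q) (ind r)) :: _ \<Rightarrow> 'k)"
  by (cases p; cases q; cases r) (simp add: fmul2_ind mult.assoc)


lemma assoc_fmul2:
  fixes f g :: "('a \<Rightarrow> 'a) \<times> 's \<Rightarrow> 'k" and h :: "'a \<times> 's \<Rightarrow> 'k"
  assumes "fs f" "fs g" "fs h"
  shows "fmul2 PS.mm (fmul2 CS.mm f g) h = fmul2 PS.mm f (fmul2 PS.mm g h)"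
proof -
  have A: "fmul2 PS.mm (fmul2 CS.mm (ind p) (ind q)) h = fmul2 PS.mm (ind p) (fmul2 PS.mm (ind q) h)" for p q
    by (rule flin_ext[OF flin_fmul2_right flin_comp[OF flin_fmul2_right flin_fmul2_right] _ assms(3)])
       (simp_all add: assoc_ind)
  have B: "fmul2 PS.mm (fmul2 CS.mm (ind p) g) h = fmul2 PS.mm (ind p) (fmul2 PS.mm g h)" for p
    by (rule flin_ext[OF flin_comp[OF flin_fmul2_right flin_fmul2_left] flin_comp[OF flin_fmul2_left flin_fmul2_right] _ assms(2)])
       (simp_all add: A assms)
  show ?thesis
    by (rule flin_ext[OF flin_comp[OF flin_fmul2_left flin_fmul2_left] flin_fmul2_left _ assms(1)])
       (simp_all add: B assms)
qed

lemma psi_muc: "X \<in> TC \<Longrightarrow> Y \<in> TC \<Longrightarrow> Z \<in> T \<Longrightarrow> \<psi> (muc X Y) Z = \<psi> X (\<psi> Y Z)"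
  by (elim TC_cases T_cases)
     (simp add: psi_cls muc_cls CS.prod_free fs_CA assoc_fmul2)

lemma psi_tm: "g \<in> CA sA mA \<Longrightarrow> \<psi> (tmc g s) (tm a t) = tm (g a) (s * t)"
  by (simp add: tmc_cls tm_cls psi_cls free_on_ind fmul2_ind)

lemma psi_one: assumes "Z \<in> T" shows "\<psi> (tmc id 1) Z = Z"
proof -
  obtain h where h: "fs h" "Z = tcls R h" using assms by (rule T_cases)
  have "fmul2 PS.mm (ind (id, 1)) h = (\<lambda>x. x) h"
    by (rule flin_ext[OF flin_fmul2_right _ _ h(1)]) (auto simp: flin_def fmul2_ind)
  then show ?thesis using h by (simp add: tmc_cls psi_cls free_on_ind CA_id)
qed

lemma psi_id_tm: "\<psi> (tmc id s) (tm a t) = tm a (s * t)"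
  using psi_tm[OF CA_id] by simp

lemma muc_tm1: "muc (tmc id s) (tmc id t) = tmc id (s * t)"
  by (simp add: tmc_cls muc_cls free_on_ind CA_id fmul2_ind)

lemma RC_gen2: "g \<in> CA sA mA \<Longrightarrow> (\<lambda>p. ind (g, s + t) p - ind (g, s) p - ind (g, t) p) \<in> RC"
  unfolding rels_CS_def tensor_rels_lincombs by (rule lincombs_gen, unfold tgens_def, rule UnI1, rule UnI1, rule UnI2, blast)
lemma RC_gen4: "g \<in> CA sA mA \<Longrightarrow> (\<lambda>p. ind (g, sS c s) p - c * ind (g, s) p) \<in> RC"
  unfolding rels_CS_def tensor_rels_lincombs by (rule lincombs_gen, unfold tgens_def, rule UnI2, blast)
lemma R_gen1: "(\<lambda>p. ind (a + b, s) p - ind (a, s) p - ind (b, s) p) \<in> R"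
  unfolding rels_AS_def tensor_rels_lincombs by (rule lincombs_gen, unfold tgens_def, rule UnI1, rule UnI1, rule UnI1, blast)
lemma R_gen2: "(\<lambda>p. ind (a, s + t) p - ind (a, s) p - ind (a, t) p) \<in> R"
  unfolding rels_AS_def tensor_rels_lincombs by (rule lincombs_gen, unfold tgens_def, rule UnI1, rule UnI1, rule UnI2, blast)
lemma R_gen3: "(\<lambda>p. ind (sA c a, s) p - c * ind (a, s) p) \<in> R"
  unfolding rels_AS_def tensor_rels_lincombs by (rule lincombs_gen, unfold tgens_def, rule UnI1, rule UnI2, blast)
lemma R_gen4: "(\<lambda>p. ind (a, sS c s) p - c * ind (a, s) p) \<in> R"
  unfolding rels_AS_def tensor_rels_lincombs by (rule lincombs_gen, unfold tgens_def, rule UnI2, blast)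

lemma adc_tm1: "adc (tmc id s) (tmc id t) = tmc id (s + t)"
proof -
  have "tcls RC (ind (id, s + t)) = tcls RC (\<lambda>p. ind (id, s) p + ind (id, t) p)"
    using RC_gen2[OF CA_id, of s t] by (simp add: tcls_eq_iff[OF RC_fsub] algebra_simps)
  then show ?thesis by (simp add: tmc_cls addc_cls)
qed
lemma scc_tm1: "scc c (tmc id s) = tmc id (sS c s)"
proof -
  have "tcls RC (ind (id, sS c s)) = tcls RC (\<lambda>p. c * ind (id, s) p)"
    using RC_gen4[OF CA_id, of c s] by (simp add: tcls_eq_iff[OF RC_fsub] algebra_simps)
  then show ?thesis by (simp add: tmc_cls scc_cls)
qed
lemma ad_tm1: "ad (tm a s) (tm b s) = tm (a + b) s"
proof -
  have "tcls R (ind (a + b, s)) = tcls R (\<lambda>p. ind (a, s) p + ind (b, s) p)"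
    using R_gen1[of a b s] by (simp add: tcls_eq_iff[OF R_fsub] algebra_simps)
  then show ?thesis by (simp add: tm_cls add_cls)
qed
lemma ad_tm2: "ad (tm a s) (tm a t) = tm a (s + t)"
proof -
  have "tcls R (ind (a, s + t)) = tcls R (\<lambda>p. ind (a, s) p + ind (a, t) p)"
    using R_gen2[of a s t] by (simp add: tcls_eq_iff[OF R_fsub] algebra_simps)
  then show ?thesis by (simp add: tm_cls add_cls)
qed
lemma sc_tm1: "sc c (tm a s) = tm (sA c a) s"
proof -
  have "tcls R (ind (sA c a, s)) = tcls R (\<lambda>p. c * ind (a, s) p)"
    using R_gen3[of c a s] by (simp add: tcls_eq_iff[OF R_fsub] algebra_simps)
  then show ?thesis by (simp add: tm_cls sc_cls)
qed
lemma sc_tm2: "sc c (tm a s) = tm a (sS c s)"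
proof -
  have "tcls R (ind (a, sS c s)) = tcls R (\<lambda>p. c * ind (a, s) p)"
    using R_gen4[of a c s] by (simp add: tcls_eq_iff[OF R_fsub] algebra_simps)
  then show ?thesis by (simp add: tm_cls sc_cls)
qed

lemma TC_tmc: "g \<in> CA sA mA \<Longrightarrow> tmc g s \<in> TC" by (simp add: tmc_cls TC_I free_on_ind)
lemma TC_adc: "X \<in> TC \<Longrightarrow> Y \<in> TC \<Longrightarrow> adc X Y \<in> TC"
  by (elim TC_cases) (simp add: addc_cls TC_I free_on_add)
lemma TC_scc: "X \<in> TC \<Longrightarrow> scc c X \<in> TC"
  by (elim TC_cases) (simp add: scc_cls TC_I free_on_scale)
lemma TC_muc: "X \<in> TC \<Longrightarrow> Y \<in> TC \<Longrightarrow> muc X Y \<in> TC"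
  by (elim TC_cases) (simp add: muc_cls TC_I CS.prod_free)

end

context L22 begin

abbreviation "Cent \<equiv> centroid_on T ad sc mu"
abbreviation "Der \<equiv> derivs T T ad sc mu"

lemma Cent_ext: "L \<in> Cent \<Longrightarrow> L \<in> extensional T" by (simp add: centroid_on_def)
lemma Cent_T: "L \<in> Cent \<Longrightarrow> Z \<in> T \<Longrightarrow> L Z \<in> T" by (simp add: centroid_on_def lin_on_def)
lemma Cent_ad: "L \<in> Cent \<Longrightarrow> Z \<in> T \<Longrightarrow> W \<in> T \<Longrightarrow> L (ad Z W) = ad (L Z) (L W)"
  by (simp add: centroid_on_def lin_on_def)
lemma Cent_sc: "L \<in> Cent \<Longrightarrow> Z \<in> T \<Longrightarrow> L (sc c Z) = sc c (L Z)"
  by (simp add: centroid_on_def lin_on_def)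
lemma Cent_mu1: "L \<in> Cent \<Longrightarrow> Z \<in> T \<Longrightarrow> W \<in> T \<Longrightarrow> L (mu Z W) = mu (L Z) W"
  unfolding centroid_on_def by blast
lemma Cent_mu2: "L \<in> Cent \<Longrightarrow> Z \<in> T \<Longrightarrow> W \<in> T \<Longrightarrow> L (mu Z W) = mu Z (L W)"
  unfolding centroid_on_def by blast
lemma Cent_tz: "L \<in> Cent \<Longrightarrow> L tz = tz"
  using Cent_sc[of L tz 0] T_tz by (simp add: sc0)
lemma Cent_sub: "L \<in> Cent \<Longrightarrow> Z \<in> T \<Longrightarrow> W \<in> T \<Longrightarrow> L (sub Z W) = sub (L Z) (L W)"
  by (simp add: sub_def Cent_ad Cent_sc T_sc)

lemma Der_ext: "d \<in> Der \<Longrightarrow> d \<in> extensional T" by (simp add: derivs_def)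
lemma Der_T: "d \<in> Der \<Longrightarrow> Z \<in> T \<Longrightarrow> d Z \<in> T" by (simp add: derivs_def lin_on_def)
lemma Der_ad: "d \<in> Der \<Longrightarrow> Z \<in> T \<Longrightarrow> W \<in> T \<Longrightarrow> d (ad Z W) = ad (d Z) (d W)"
  by (simp add: derivs_def lin_on_def)
lemma Der_sc: "d \<in> Der \<Longrightarrow> Z \<in> T \<Longrightarrow> d (sc c Z) = sc c (d Z)"
  by (simp add: derivs_def lin_on_def)
lemma Der_mu: "d \<in> Der \<Longrightarrow> Z \<in> T \<Longrightarrow> W \<in> T \<Longrightarrow> d (mu Z W) = ad (mu (d Z) W) (mu Z (d W))"
  by (simp add: derivs_def)
lemma Der_tz: "d \<in> Der \<Longrightarrow> d tz = tz"
  using Der_sc[of d tz 0] T_tz by (simp add: sc0)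

definition "comm d L = restrict (\<lambda>X. sub (d (L X)) (L (d X))) T"

lemma comm_Cent: assumes d: "d \<in> Der" and L: "L \<in> Cent" shows "comm d L \<in> Cent"
proof -
  have cT: "comm d L Z \<in> T" if "Z \<in> T" for Z
    using that by (simp add: comm_def T_sub Der_T[OF d] Cent_T[OF L])
  have cad: "comm d L (ad Z W) = ad (comm d L Z) (comm d L W)" if "Z \<in> T" "W \<in> T" for Z W
    using that by (simp add: comm_def T_add Der_ad[OF d] Cent_ad[OF L] Der_T[OF d] Cent_T[OF L] I1)
  have csc: "comm d L (sc c Z) = sc c (comm d L Z)" if "Z \<in> T" for Z c
    using that by (simp add: comm_def T_sc Der_sc[OF d] Cent_sc[OF L] Der_T[OF d] Cent_T[OF L] I4)
  have cm1: "comm d L (mu Z W) = mu (comm d L Z) W" if "Z \<in> T" "W \<in> T" for Z W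
  proof -
    have "comm d L (mu Z W) = sub (d (mu (L Z) W)) (L (ad (mu (d Z) W) (mu Z (d W))))"
      using that by (simp add: comm_def T_mu Cent_mu1[OF L] Der_mu[OF d])
    also have "\<dots> = sub (ad (mu (d (L Z)) W) (mu (L Z) (d W))) (ad (mu (L (d Z)) W) (mu (L Z) (d W)))"
      using that by (simp add: Der_mu[OF d] Cent_T[OF L] Cent_ad[OF L] T_mu Der_T[OF d] Cent_mu1[OF L])
    also have "\<dots> = mu (sub (d (L Z)) (L (d Z))) W"
      using that by (intro I2) (simp_all add: Der_T[OF d] Cent_T[OF L])
    finally show ?thesis using that by (simp add: comm_def)
  qed
  have cm2: "comm d L (mu Z W) = mu Z (comm d L W)" if "Z \<in> T" "W \<in> T" for Z W
  proof -
    have "comm d L (mu Z W) = sub (d (mu Z (L W))) (L (ad (mu (d Z) W) (mu Z (d W))))"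
      using that by (simp add: comm_def T_mu Cent_mu2[OF L] Der_mu[OF d])
    also have "\<dots> = sub (ad (mu (d Z) (L W)) (mu Z (d (L W)))) (ad (mu (d Z) (L W)) (mu Z (L (d W))))"
      using that by (simp add: Der_mu[OF d] Cent_T[OF L] Cent_ad[OF L] T_mu Der_T[OF d] Cent_mu2[OF L])
    also have "\<dots> = mu Z (sub (d (L W)) (L (d W)))"
      using that by (intro I3) (simp_all add: Der_T[OF d] Cent_T[OF L])
    finally show ?thesis using that by (simp add: comm_def)
  qed
  show ?thesis unfolding centroid_on_def lin_on_def
    using cT cad csc cm1 cm2 by (simp add: comm_def)
qed

lemma comm_apply: "Z \<in> T \<Longrightarrow> comm d L Z = sub (d (L Z)) (L (d Z))" by (simp add: comm_def)

end

context L22 begin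

lemma T_tcarrier: "T = tcarrier R UNIV UNIV" by (simp add: TAS_def)

lemma mu_tz_r: "X \<in> T \<Longrightarrow> mu X tz = tz"
  using mu_sc_r[of tz X 0] T_tz by (simp add: sc0)
lemma mu_tz_l: "X \<in> T \<Longrightarrow> mu tz X = tz"
  using mu_sc_l[of tz X 0] T_tz by (simp add: sc0)
lemma ad_tz: "ad tz tz = tz" by (simp add: tz_cls add_cls)

lemma leibniz_ext:
  assumes dT: "\<And>Z. Z \<in> T \<Longrightarrow> d Z \<in> T"
    and dad: "\<And>Z W. Z \<in> T \<Longrightarrow> W \<in> T \<Longrightarrow> d (ad Z W) = ad (d Z) (d W)"
    and dsc: "\<And>c Z. Z \<in> T \<Longrightarrow> d (sc c Z) = sc c (d Z)"
    and tml: "\<And>a s b t. d (mu (tm a s) (tm b t)) = ad (mu (d (tm a s)) (tm b t)) (mu (tm a s) (d (tm b t)))"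
    and Z: "Z \<in> T" and W: "W \<in> T"
  shows "d (mu Z W) = ad (mu (d Z) W) (mu Z (d W))"
proof -
  have dtz: "d tz = tz" using dsc[of tz 0] T_tz by (simp add: sc0)
  have step: "d (mu (tm a s) W) = ad (mu (d (tm a s)) W) (mu (tm a s) (d W))" if W: "W \<in> T" for a s W
    using W[unfolded T_tcarrier]
  proof (induction W rule: tcarrier_induct[OF R_fsub, consumes 1, case_names tz tm ad sc])
    case tz
    then show ?case using T_tm by (simp add: mu_tz_r dtz dT ad_tz)
  next
    case (tm u v)
    show ?case by (rule tml)
  next
    case (ad X Y)
    then have X: "X \<in> T" and Y: "Y \<in> T" by (simp_all add: T_tcarrier)
    have "d (mu (tm a s) (ad X Y)) = ad (d (mu (tm a s) X)) (d (mu (tm a s) Y))"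
      using X Y by (simp add: mu_add_r T_tm dad T_mu)
    also have "\<dots> = ad (ad (mu (d (tm a s)) X) (mu (tm a s) (d X))) (ad (mu (d (tm a s)) Y) (mu (tm a s) (d Y)))"
      using ad by simp
    also have "\<dots> = ad (ad (mu (d (tm a s)) X) (mu (d (tm a s)) Y)) (ad (mu (tm a s) (d X)) (mu (tm a s) (d Y)))"
      using X Y by (intro I9) (simp_all add: T_mu T_tm dT)
    also have "\<dots> = ad (mu (d (tm a s)) (ad X Y)) (mu (tm a s) (d (ad X Y)))"
      using X Y by (simp add: mu_add_r T_tm dT dad)
    finally show ?case .
  next
    case (sc c X)
    then have X: "X \<in> T" by (simp add: T_tcarrier)
    have "d (mu (tm a s) (sc c X)) = sc c (d (mu (tm a s) X))"
      using X by (simp add: mu_sc_r T_tm dsc T_mu)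
    also have "\<dots> = sc c (ad (mu (d (tm a s)) X) (mu (tm a s) (d X)))" using sc by simp
    also have "\<dots> = ad (sc c (mu (d (tm a s)) X)) (sc c (mu (tm a s) (d X)))"
      using X by (intro I10) (simp_all add: T_mu T_tm dT)
    also have "\<dots> = ad (mu (d (tm a s)) (sc c X)) (mu (tm a s) (d (sc c X)))"
      using X by (simp add: mu_sc_r T_tm dT dsc)
    finally show ?case .
  qed
  show ?thesis
    using Z[unfolded T_tcarrier]
  proof (induction Z rule: tcarrier_induct[OF R_fsub, consumes 1, case_names tz tm ad sc])
    case tz
    then show ?case using W by (simp add: mu_tz_l dtz dT ad_tz T_tz)
  next
    case (tm u v)
    show ?case by (rule step[OF W])
  next
    case (ad X Y)
    then have X: "X \<in> T" and Y: "Y \<in> T" by (simp_all add: T_tcarrier)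
    have "d (mu (ad X Y) W) = ad (d (mu X W)) (d (mu Y W))"
      using X Y W by (simp add: mu_add_l dad T_mu)
    also have "\<dots> = ad (ad (mu (d X) W) (mu X (d W))) (ad (mu (d Y) W) (mu Y (d W)))"
      using ad by simp
    also have "\<dots> = ad (ad (mu (d X) W) (mu (d Y) W)) (ad (mu X (d W)) (mu Y (d W)))"
      using X Y W by (intro I9) (simp_all add: T_mu dT)
    also have "\<dots> = ad (mu (d (ad X Y)) W) (mu (ad X Y) (d W))"
      using X Y W by (simp add: mu_add_l dT dad)
    finally show ?case .
  next
    case (sc c X)
    then have X: "X \<in> T" by (simp add: T_tcarrier)
    have "d (mu (sc c X) W) = sc c (d (mu X W))"
      using X W by (simp add: mu_sc_l dsc T_mu)
    also have "\<dots> = sc c (ad (mu (d X) W) (mu X (d W)))" using sc by simp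
    also have "\<dots> = ad (sc c (mu (d X) W)) (sc c (mu X (d W)))"
      using X W by (intro I10) (simp_all add: T_mu dT)
    also have "\<dots> = ad (mu (d (sc c X)) W) (mu (sc c X) (d W))"
      using X W by (simp add: mu_sc_l dT dsc)
    finally show ?case .
  qed
qed

lemma lin_agree:
  assumes ad1: "\<And>Z W. Z \<in> T \<Longrightarrow> W \<in> T \<Longrightarrow> f (ad Z W) = ad (f Z) (f W)"
    and sc1: "\<And>c Z. Z \<in> T \<Longrightarrow> f (sc c Z) = sc c (f Z)"
    and ad2: "\<And>Z W. Z \<in> T \<Longrightarrow> W \<in> T \<Longrightarrow> g (ad Z W) = ad (g Z) (g W)"
    and sc2: "\<And>c Z. Z \<in> T \<Longrightarrow> g (sc c Z) = sc c (g Z)"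
    and tmq: "\<And>a s. f (tm a s) = g (tm a s)"
    and Z: "Z \<in> T"
  shows "f Z = g Z"
  using Z[unfolded T_tcarrier]
proof (induction Z rule: tcarrier_induct[OF R_fsub, consumes 1, case_names tz tm ad sc])
  case tz
  have "f tz = tz" using sc1[of tz 0] T_tz by (simp add: sc0)
  moreover have "g tz = tz" using sc2[of tz 0] T_tz by (simp add: sc0)
  ultimately show ?case by simp
next
  case (tm u v) show ?case by (rule tmq)
next
  case (ad X Y) then show ?case by (simp add: T_tcarrier[symmetric] ad1 ad2)
next
  case (sc c X) then show ?case by (simp add: T_tcarrier[symmetric] sc1 sc2)
qed

end

locale L22i = L22 +
  assumes psi_iso: "bij_betw (psi sA mA sS) (TCS sA mA sS)
        (centroid_on (TAS sA sS) (tadd (rels_AS sA sS)) (tscale (rels_AS sA sS)) (mulAS sA sS mA))"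
begin

abbreviation "O1 \<equiv> OneS sA mA sS"

lemma psi_Cent: "X \<in> TC \<Longrightarrow> \<psi> X \<in> Cent" using bij_betw_apply[OF psi_iso] .
lemma psi_inj: "X \<in> TC \<Longrightarrow> Y \<in> TC \<Longrightarrow> \<psi> X = \<psi> Y \<Longrightarrow> X = Y"
  using bij_betw_imp_inj_on[OF psi_iso] by (rule inj_onD)
lemma psi_inv: "C \<in> Cent \<Longrightarrow> inv_into TC \<psi> C \<in> TC"
  using psi_iso by (metis bij_betw_def inv_into_into)
lemma psi_inv2: "C \<in> Cent \<Longrightarrow> \<psi> (inv_into TC \<psi> C) = C"
  using psi_iso by (metis bij_betw_inv_into_right)
lemma psi_inv_eq: "W \<in> TC \<Longrightarrow> inv_into TC \<psi> (\<psi> W) = W"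
  using bij_betw_imp_inj_on[OF psi_iso] by (rule inv_into_f_f)

lemma O1_iff: "Y \<in> O1 \<longleftrightarrow> (\<exists>s. Y = tmc id s)" by (simp add: OneS_def)
lemma O1_TC: "Y \<in> O1 \<Longrightarrow> Y \<in> TC" by (auto simp: O1_iff TC_tmc CA_id)

definition "Fm d = restrict (\<lambda>Y. inv_into TC \<psi> (comm d (\<psi> Y))) O1"

lemma Fm_TC: "d \<in> Der \<Longrightarrow> Y \<in> O1 \<Longrightarrow> Fm d Y \<in> TC"
  by (simp add: Fm_def psi_inv comm_Cent psi_Cent O1_TC)
lemma Fm_psi: "d \<in> Der \<Longrightarrow> Y \<in> O1 \<Longrightarrow> \<psi> (Fm d Y) = comm d (\<psi> Y)"
  by (simp add: Fm_def psi_inv2 comm_Cent psi_Cent O1_TC)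
lemma Fm_eqI: "Y \<in> O1 \<Longrightarrow> W \<in> TC \<Longrightarrow> comm d (\<psi> Y) = \<psi> W \<Longrightarrow> Fm d Y = W"
  by (simp add: Fm_def psi_inv_eq)

lemma fun_eq_T: "f \<in> extensional T \<Longrightarrow> g \<in> extensional T \<Longrightarrow> (\<And>Z. Z \<in> T \<Longrightarrow> f Z = g Z) \<Longrightarrow> f = g"
  by (rule extensionalityI)

lemma comm_ext: "comm d L \<in> extensional T" by (simp add: comm_def)

end

context L22i begin

lemma Fm_Der1S: assumes d: "d \<in> Der" shows "Fm d \<in> Der1S sA mA sS"
proof -
  have ext: "Fm d \<in> extensional O1" by (simp add: Fm_def)
  have inTC: "\<forall>Y\<in>O1. Fm d Y \<in> TC" using Fm_TC[OF d] by blast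
  have add: "Fm d (adc Y Y') = adc (Fm d Y) (Fm d Y')" if Y: "Y \<in> O1" "Y' \<in> O1" for Y Y'
  proof -
    obtain s t where st: "Y = tmc id s" "Y' = tmc id t" using Y O1_iff by auto
    have YT: "Y \<in> TC" "Y' \<in> TC" using Y O1_TC by auto
    have ins: "adc Y Y' \<in> O1" unfolding st adc_tm1 O1_iff by blast
    have P: "Fm d Y \<in> TC" "Fm d Y' \<in> TC" using Fm_TC[OF d] Y by auto
    show ?thesis
    proof (rule Fm_eqI[OF ins TC_adc[OF P]])
      show "comm d (\<psi> (adc Y Y')) = \<psi> (adc (Fm d Y) (Fm d Y'))"
      proof (rule fun_eq_T[OF comm_ext psi_ext])
        fix Z assume Z: "Z \<in> T"
        have "comm d (\<psi> (adc Y Y')) Z = sub (d (ad (\<psi> Y Z) (\<psi> Y' Z))) (ad (\<psi> Y (d Z)) (\<psi> Y' (d Z)))"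
          using Z by (simp add: comm_apply psi_adc YT Der_T[OF d])
        also have "\<dots> = sub (ad (d (\<psi> Y Z)) (d (\<psi> Y' Z))) (ad (\<psi> Y (d Z)) (\<psi> Y' (d Z)))"
          using Z by (simp add: Der_ad[OF d] T_psi YT)
        also have "\<dots> = ad (comm d (\<psi> Y) Z) (comm d (\<psi> Y') Z)"
          using Z by (simp add: comm_apply I1 Der_T[OF d] T_psi YT)
        also have "\<dots> = \<psi> (adc (Fm d Y) (Fm d Y')) Z"
          using Z by (simp add: psi_adc P Fm_psi[OF d] Y)
        finally show "comm d (\<psi> (adc Y Y')) Z = \<psi> (adc (Fm d Y) (Fm d Y')) Z" .
      qed
    qed
  qed
  have scl: "Fm d (scc c Y) = scc c (Fm d Y)" if Y: "Y \<in> O1" for Y c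
  proof -
    obtain s where st: "Y = tmc id s" using Y O1_iff by auto
    have YT: "Y \<in> TC" using Y O1_TC by auto
    have ins: "scc c Y \<in> O1" unfolding st scc_tm1 O1_iff by blast
    have P: "Fm d Y \<in> TC" using Fm_TC[OF d] Y by auto
    show ?thesis
    proof (rule Fm_eqI[OF ins TC_scc[OF P]])
      show "comm d (\<psi> (scc c Y)) = \<psi> (scc c (Fm d Y))"
      proof (rule fun_eq_T[OF comm_ext psi_ext])
        fix Z assume Z: "Z \<in> T"
        have "comm d (\<psi> (scc c Y)) Z = sub (d (sc c (\<psi> Y Z))) (sc c (\<psi> Y (d Z)))"
          using Z by (simp add: comm_apply psi_scc YT Der_T[OF d])
        also have "\<dots> = sub (sc c (d (\<psi> Y Z))) (sc c (\<psi> Y (d Z)))"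
          using Z by (simp add: Der_sc[OF d] T_psi YT)
        also have "\<dots> = sc c (comm d (\<psi> Y) Z)"
          using Z by (simp add: comm_apply I4 Der_T[OF d] T_psi YT)
        also have "\<dots> = \<psi> (scc c (Fm d Y)) Z"
          using Z by (simp add: psi_scc P Fm_psi[OF d] Y)
        finally show "comm d (\<psi> (scc c Y)) Z = \<psi> (scc c (Fm d Y)) Z" .
      qed
    qed
  qed
  have leib: "Fm d (muc Y Y') = adc (muc (Fm d Y) Y') (muc Y (Fm d Y'))" if Y: "Y \<in> O1" "Y' \<in> O1" for Y Y'
  proof -
    obtain s t where st: "Y = tmc id s" "Y' = tmc id t" using Y O1_iff by auto
    have YT: "Y \<in> TC" "Y' \<in> TC" using Y O1_TC by auto
    have ins: "muc Y Y' \<in> O1" unfolding st muc_tm1 O1_iff by blast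
    have P: "Fm d Y \<in> TC" "Fm d Y' \<in> TC" using Fm_TC[OF d] Y by auto
    have W: "adc (muc (Fm d Y) Y') (muc Y (Fm d Y')) \<in> TC" using P YT by (simp add: TC_adc TC_muc)
    have CY: "\<psi> Y \<in> Cent" by (rule psi_Cent[OF YT(1)])
    show ?thesis
    proof (rule Fm_eqI[OF ins W])
      show "comm d (\<psi> (muc Y Y')) = \<psi> (adc (muc (Fm d Y) Y') (muc Y (Fm d Y')))"
      proof (rule fun_eq_T[OF comm_ext psi_ext])
        fix Z assume Z: "Z \<in> T"
        have T1: "\<psi> Y' Z \<in> T" "d Z \<in> T" "\<psi> Y' (d Z) \<in> T" "d (\<psi> Y' Z) \<in> T" "\<psi> Y (\<psi> Y' Z) \<in> T"
          using Z YT by (simp_all add: T_psi Der_T[OF d])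
        have "\<psi> (adc (muc (Fm d Y) Y') (muc Y (Fm d Y'))) Z =
              ad (\<psi> (Fm d Y) (\<psi> Y' Z)) (\<psi> Y (\<psi> (Fm d Y') Z))"
          using Z P YT by (simp add: psi_adc psi_muc TC_muc)
        also have "\<dots> = ad (sub (d (\<psi> Y (\<psi> Y' Z))) (\<psi> Y (d (\<psi> Y' Z)))) (\<psi> Y (sub (d (\<psi> Y' Z)) (\<psi> Y' (d Z))))"
          using Z T1 by (simp add: Fm_psi[OF d] Y comm_apply)
        also have "\<dots> = ad (sub (d (\<psi> Y (\<psi> Y' Z))) (\<psi> Y (d (\<psi> Y' Z)))) (sub (\<psi> Y (d (\<psi> Y' Z))) (\<psi> Y (\<psi> Y' (d Z))))"
          using T1 by (simp add: Cent_sub[OF CY])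
        also have "\<dots> = sub (d (\<psi> Y (\<psi> Y' Z))) (\<psi> Y (\<psi> Y' (d Z)))"
          using T1 YT by (intro I5) (simp_all add: Der_T[OF d] T_psi)
        also have "\<dots> = comm d (\<psi> (muc Y Y')) Z"
          using Z YT by (simp add: comm_apply psi_muc Der_T[OF d])
        finally show "comm d (\<psi> (muc Y Y')) Z = \<psi> (adc (muc (Fm d Y) Y') (muc Y (Fm d Y'))) Z" by simp
      qed
    qed
  qed
  show ?thesis unfolding Der1S_def derivs_def lin_on_def
    using ext inTC add scl leib by blast
qed

lemma Fm_add: assumes d: "d \<in> Der" and d': "d' \<in> Der"
  shows "Fm (restrict (\<lambda>x. ad (d x) (d' x)) T) = restrict (\<lambda>Y. adc (Fm d Y) (Fm d' Y)) O1"
proof (rule ext)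
  fix Y
  show "Fm (restrict (\<lambda>x. ad (d x) (d' x)) T) Y = restrict (\<lambda>Y. adc (Fm d Y) (Fm d' Y)) O1 Y"
  proof (cases "Y \<in> O1")
    case False then show ?thesis by (simp add: Fm_def)
  next
    case Y: True
    have YT: "Y \<in> TC" using Y O1_TC by auto
    have CY: "\<psi> Y \<in> Cent" by (rule psi_Cent[OF YT])
    have P: "Fm d Y \<in> TC" "Fm d' Y \<in> TC" using Fm_TC d d' Y by auto
    have "Fm (restrict (\<lambda>x. ad (d x) (d' x)) T) Y = adc (Fm d Y) (Fm d' Y)"
    proof (rule Fm_eqI[OF Y TC_adc[OF P]])
      show "comm (restrict (\<lambda>x. ad (d x) (d' x)) T) (\<psi> Y) = \<psi> (adc (Fm d Y) (Fm d' Y))"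
      proof (rule fun_eq_T[OF comm_ext psi_ext])
        fix Z assume Z: "Z \<in> T"
        have T1: "\<psi> Y Z \<in> T" "d Z \<in> T" "d' Z \<in> T" using Z YT by (simp_all add: T_psi Der_T[OF d] Der_T[OF d'])
        have "comm (restrict (\<lambda>x. ad (d x) (d' x)) T) (\<psi> Y) Z = sub (ad (d (\<psi> Y Z)) (d' (\<psi> Y Z))) (ad (\<psi> Y (d Z)) (\<psi> Y (d' Z)))"
          using Z T1 by (simp add: comm_apply Cent_ad[OF CY])
        also have "\<dots> = ad (comm d (\<psi> Y) Z) (comm d' (\<psi> Y) Z)"
          using Z T1 by (simp add: comm_apply I1 Der_T[OF d] Der_T[OF d'] Cent_T[OF CY])
        also have "\<dots> = \<psi> (adc (Fm d Y) (Fm d' Y)) Z"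
          using Z by (simp add: psi_adc P Fm_psi[OF d] Fm_psi[OF d'] Y)
        finally show "comm (restrict (\<lambda>x. ad (d x) (d' x)) T) (\<psi> Y) Z = \<psi> (adc (Fm d Y) (Fm d' Y)) Z" .
      qed
    qed
    then show ?thesis using Y by simp
  qed
qed

lemma Fm_sc: assumes d: "d \<in> Der"
  shows "Fm (restrict (\<lambda>x. sc c (d x)) T) = restrict (\<lambda>Y. scc c (Fm d Y)) O1"
proof (rule ext)
  fix Y
  show "Fm (restrict (\<lambda>x. sc c (d x)) T) Y = restrict (\<lambda>Y. scc c (Fm d Y)) O1 Y"
  proof (cases "Y \<in> O1")
    case False then show ?thesis by (simp add: Fm_def)
  next
    case Y: True
    have YT: "Y \<in> TC" using Y O1_TC by auto
    have CY: "\<psi> Y \<in> Cent" by (rule psi_Cent[OF YT])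
    have P: "Fm d Y \<in> TC" using Fm_TC d Y by auto
    have "Fm (restrict (\<lambda>x. sc c (d x)) T) Y = scc c (Fm d Y)"
    proof (rule Fm_eqI[OF Y TC_scc[OF P]])
      show "comm (restrict (\<lambda>x. sc c (d x)) T) (\<psi> Y) = \<psi> (scc c (Fm d Y))"
      proof (rule fun_eq_T[OF comm_ext psi_ext])
        fix Z assume Z: "Z \<in> T"
        have T1: "\<psi> Y Z \<in> T" "d Z \<in> T" using Z YT by (simp_all add: T_psi Der_T[OF d])
        have "comm (restrict (\<lambda>x. sc c (d x)) T) (\<psi> Y) Z = sub (sc c (d (\<psi> Y Z))) (sc c (\<psi> Y (d Z)))"
          using Z T1 by (simp add: comm_apply Cent_sc[OF CY])
        also have "\<dots> = sc c (comm d (\<psi> Y) Z)"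
          using Z T1 by (simp add: comm_apply I4 Der_T[OF d] Cent_T[OF CY])
        also have "\<dots> = \<psi> (scc c (Fm d Y)) Z"
          using Z by (simp add: psi_scc P Fm_psi[OF d] Y)
        finally show "comm (restrict (\<lambda>x. sc c (d x)) T) (\<psi> Y) Z = \<psi> (scc c (Fm d Y)) Z" .
      qed
    qed
    then show ?thesis using Y by simp
  qed
qed

lemma DerA1_iff: "d \<in> DerA1 sA mA sS \<longleftrightarrow> d \<in> Der \<and> (\<forall>a. d (tm a 1) = tz)"
  by (simp add: DerA1_def)

lemma DerA1_tm: assumes "d \<in> DerA1 sA mA sS" shows "d (tm a s) = comm d (\<psi> (tmc id s)) (tm a 1)"
proof -
  have d: "d \<in> Der" and z: "d (tm a 1) = tz" using assms by (auto simp: DerA1_iff)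
  have C: "\<psi> (tmc id s) \<in> Cent" by (rule psi_Cent[OF TC_tmc[OF CA_id]])
  show ?thesis using T_tm
    by (simp add: comm_apply psi_id_tm z Cent_tz[OF C] I6 Der_T[OF d])
qed

lemma Fm_inj: assumes d: "d \<in> DerA1 sA mA sS" and d': "d' \<in> DerA1 sA mA sS" and eq: "Fm d = Fm d'"
  shows "d = d'"
proof -
  have dD: "d \<in> Der" "d' \<in> Der" using d d' by (auto simp: DerA1_iff)
  have tmq: "d (tm a s) = d' (tm a s)" for a s
  proof -
    have Y: "tmc id s \<in> O1" by (auto simp: O1_iff)
    have "comm d (\<psi> (tmc id s)) = comm d' (\<psi> (tmc id s))"
      using Fm_psi[OF dD(1) Y] Fm_psi[OF dD(2) Y] eq by simp
    then show ?thesis using DerA1_tm[OF d] DerA1_tm[OF d'] by simp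
  qed
  show ?thesis
    by (rule fun_eq_T[OF Der_ext[OF dD(1)] Der_ext[OF dD(2)]], rule lin_agree)
       (simp_all add: Der_ad[OF dD(1)] Der_ad[OF dD(2)] Der_sc[OF dD(1)] Der_sc[OF dD(2)] tmq)
qed

end

context L22i begin

lemma Fm_surj: assumes D: "D \<in> Der1S sA mA sS" shows "\<exists>d\<in>DerA1 sA mA sS. Fm d = D"
proof -
  have Dext: "D \<in> extensional O1" using D by (simp add: Der1S_def derivs_def)
  have DTC: "\<And>Y. Y \<in> O1 \<Longrightarrow> D Y \<in> TC" using D by (simp add: Der1S_def derivs_def lin_on_def)
  have Dadc: "\<And>Y Y'. Y \<in> O1 \<Longrightarrow> Y' \<in> O1 \<Longrightarrow> D (adc Y Y') = adc (D Y) (D Y')"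
    using D by (simp add: Der1S_def derivs_def lin_on_def)
  have Dscc: "\<And>c Y. Y \<in> O1 \<Longrightarrow> D (scc c Y) = scc c (D Y)"
    using D by (simp add: Der1S_def derivs_def lin_on_def)
  have Dmuc: "\<And>Y Y'. Y \<in> O1 \<Longrightarrow> Y' \<in> O1 \<Longrightarrow> D (muc Y Y') = adc (muc (D Y) Y') (muc Y (D Y'))"
    using D by (simp add: Der1S_def derivs_def)
  define Dc where "Dc s = D (tmc id s)" for s
  have O1s: "tmc id s \<in> O1" for s by (auto simp: O1_iff)
  have one_TC: "tmc id s \<in> TC" for s by (rule TC_tmc[OF CA_id])
  have DcTC: "Dc s \<in> TC" for s unfolding Dc_def by (rule DTC[OF O1s])
  have DcC: "\<psi> (Dc s) \<in> Cent" for s by (rule psi_Cent[OF DcTC])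
  have oneC: "\<psi> (tmc id s) \<in> Cent" for s by (rule psi_Cent[OF one_TC])
  have Dc_add: "Dc (s + t) = adc (Dc s) (Dc t)" for s t
    unfolding Dc_def adc_tm1[symmetric] by (rule Dadc[OF O1s O1s])
  have Dc_sc: "Dc (sS c s) = scc c (Dc s)" for c s
    unfolding Dc_def scc_tm1[symmetric] by (rule Dscc[OF O1s])
  have Dc_mul: "\<psi> (Dc (s * t)) Z = ad (\<psi> (Dc s) (\<psi> (tmc id t) Z)) (\<psi> (tmc id s) (\<psi> (Dc t) Z))"
    if Z: "Z \<in> T" for s t Z
  proof -
    have "Dc (s * t) = adc (muc (Dc s) (tmc id t)) (muc (tmc id s) (Dc t))"
      unfolding Dc_def muc_tm1[symmetric] by (rule Dmuc[OF O1s O1s])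
    then show ?thesis using Z by (simp add: psi_adc psi_muc TC_muc DcTC one_TC)
  qed
  define \<beta> where "\<beta> p = \<psi> (Dc (snd p)) (tm (fst p) 1)" for p
  have lR: "tensor_rels (+) sA UNIV (+) sS UNIV = R" by (simp add: rels_AS_def)
  have RFR: "R \<subseteq> {f. fs f}" using AS.R1_free by (simp add: rels_AS_def free_UNIV)
  interpret LI: tlift "(+)" sA UNIV "(+)" sS UNIV R T "{f. fs f}" \<beta>
  proof (unfold_locales)
    show "fsub R" by (rule R_fsub)
    show "T = tcls R ` {f. fs f}" by (rule T_eq)
    show "R \<subseteq> {f. fs f}" by (rule RFR)
    show "\<And>u v. \<beta> (u, v) \<in> T" by (simp add: \<beta>_def T_psi DcTC T_tm)
    show "\<And>u u' v. \<beta> (u + u', v) = ad (\<beta> (u, v)) (\<beta> (u', v))"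
      by (simp add: \<beta>_def ad_tm1[symmetric] Cent_ad[OF DcC] T_tm)
    show "\<And>u v v'. \<beta> (u, v + v') = ad (\<beta> (u, v)) (\<beta> (u, v'))"
      by (simp add: \<beta>_def Dc_add psi_adc DcTC T_tm)
    show "\<And>c u v. \<beta> (sA c u, v) = sc c (\<beta> (u, v))"
      by (simp add: \<beta>_def sc_tm1[symmetric] Cent_sc[OF DcC] T_tm)
    show "\<And>c u v. \<beta> (u, sS c v) = sc c (\<beta> (u, v))"
      by (simp add: \<beta>_def Dc_sc psi_scc DcTC T_tm)
  qed auto
  define d where "d = restrict LI.lift T"
  have d_cls: "fs f \<Longrightarrow> d (tcls R f) = LI.lift (tcls R f)" for f by (simp add: d_def T_I)
  have dT: "d Z \<in> T" if "Z \<in> T" for Z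
    using that by (elim T_cases) (simp add: d_cls LI.lift_in[unfolded lR] free_UNIV)
  have dad: "d (ad Z W) = ad (d Z) (d W)" if "Z \<in> T" "W \<in> T" for Z W
    using that by (elim T_cases) (simp add: d_def T_add T_I LI.lift_add[unfolded lR] free_UNIV)
  have dsc: "d (sc c Z) = sc c (d Z)" if "Z \<in> T" for Z c
    using that by (elim T_cases) (simp add: d_def T_sc T_I LI.lift_scale[unfolded lR] free_UNIV)
  have dtm: "d (tm a s) = \<psi> (Dc s) (tm a 1)" for a s
    using LI.lift_tmk[unfolded lR, of a s] T_tm by (simp add: d_def \<beta>_def)
  have dtm1: "d (tm a 1) = tz" for a
  proof -
    let ?E = "\<psi> (Dc 1) (tm a 1)"
    have ET: "?E \<in> T" by (simp add: T_psi DcTC T_tm)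
    have "?E = ad (\<psi> (Dc 1) (\<psi> (tmc id 1) (tm a 1))) (\<psi> (tmc id 1) (\<psi> (Dc 1) (tm a 1)))"
      using Dc_mul[of "tm a 1" 1 1] T_tm by simp
    also have "\<dots> = ad ?E ?E" using ET T_tm by (simp add: psi_one)
    finally have "ad ?E ?E = ?E" by simp
    then show ?thesis using I7[OF ET] dtm by simp
  qed
  have tml: "d (mu (tm a s) (tm b t)) = ad (mu (d (tm a s)) (tm b t)) (mu (tm a s) (d (tm b t)))" for a s b t
  proof -
    have "d (mu (tm a s) (tm b t)) = \<psi> (Dc (s * t)) (tm (mA a b) 1)" by (simp add: mu_tm dtm)
    also have "\<dots> = ad (\<psi> (Dc s) (tm (mA a b) t)) (\<psi> (tmc id s) (\<psi> (Dc t) (tm (mA a b) 1)))"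
      using Dc_mul[of "tm (mA a b) 1" s t] T_tm by (simp add: psi_id_tm)
    also have "\<psi> (Dc s) (tm (mA a b) t) = mu (d (tm a s)) (tm b t)"
    proof -
      have e: "tm (mA a b) t = mu (tm a 1) (tm b t)" using mu_tm[of a 1 b t] by simp
      show ?thesis unfolding e by (simp add: Cent_mu1[OF DcC] T_tm dtm)
    qed
    also have "\<psi> (Dc t) (tm (mA a b) 1) = mu (tm a 1) (d (tm b t))"
    proof -
      have e: "tm (mA a b) 1 = mu (tm a 1) (tm b 1)" using mu_tm[of a 1 b 1] by simp
      show ?thesis unfolding e by (simp add: Cent_mu2[OF DcC] T_tm dtm)
    qed
    also have "\<psi> (tmc id s) (mu (tm a 1) (d (tm b t))) = mu (tm a s) (d (tm b t))"
      using T_tm dT[OF T_tm] by (simp add: Cent_mu1[OF oneC] psi_id_tm)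
    finally show ?thesis .
  qed
  have dDer: "d \<in> Der"
    unfolding derivs_def lin_on_def
    using dT dad dsc leibniz_ext[OF dT dad dsc tml] by (simp add: d_def)
  have dA1: "d \<in> DerA1 sA mA sS" using dDer dtm1 by (simp add: DerA1_iff)
  have "Fm d = D"
  proof (rule ext)
    fix Y
    show "Fm d Y = D Y"
    proof (cases "Y \<in> O1")
      case False then show ?thesis using Dext by (simp add: Fm_def extensional_def)
    next
      case Y: True
      obtain s where s: "Y = tmc id s" using Y O1_iff by auto
      have C1: "comm d (\<psi> Y) \<in> Cent" by (rule comm_Cent[OF dDer psi_Cent[OF O1_TC[OF Y]]])
      have DY: "D Y = Dc s" by (simp add: s Dc_def)
      show ?thesis
      proof (rule Fm_eqI[OF Y DTC[OF Y]])
        show "comm d (\<psi> Y) = \<psi> (D Y)"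
        proof -
          have tmq: "comm d (\<psi> Y) (tm a t) = \<psi> (D Y) (tm a t)" for a t
          proof -
            have "comm d (\<psi> Y) (tm a t) = sub (d (tm a (s * t))) (\<psi> Y (\<psi> (Dc t) (tm a 1)))"
              using T_tm by (simp add: comm_apply s psi_id_tm dtm)
            also have "d (tm a (s * t)) = ad (\<psi> (Dc s) (tm a t)) (\<psi> Y (\<psi> (Dc t) (tm a 1)))"
              using Dc_mul[of "tm a 1" s t] T_tm by (simp add: dtm psi_id_tm s)
            finally show ?thesis
              using T_tm DY by (simp add: I8 T_psi DcTC O1_TC[OF Y])
          qed
          show ?thesis
            by (rule fun_eq_T[OF comm_ext psi_ext], rule lin_agree)
              (simp_all add: Cent_ad[OF C1] Cent_sc[OF C1] Cent_ad[OF DcC] Cent_sc[OF DcC] DY tmq[unfolded DY])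
        qed
      qed
    qed
  qed
  then show ?thesis using dA1 by blast
qed

theorem main:
  "\<exists>F. fun_space_iso F (DerA1 sA mA sS) T ad sc (Der1S sA mA sS) O1 adc scc"
proof (intro exI[of _ Fm])
  have A: "\<And>d. d \<in> DerA1 sA mA sS \<Longrightarrow> d \<in> Der" by (simp add: DerA1_iff)
  have bij: "bij_betw Fm (DerA1 sA mA sS) (Der1S sA mA sS)"
    unfolding bij_betw_def
  proof
    show "inj_on Fm (DerA1 sA mA sS)" by (rule inj_onI) (rule Fm_inj)
    show "Fm ` DerA1 sA mA sS = Der1S sA mA sS"
      using Fm_Der1S[OF A] Fm_surj by blast
  qed
  show "fun_space_iso Fm (DerA1 sA mA sS) T ad sc (Der1S sA mA sS) O1 adc scc"
    unfolding fun_space_iso_def using bij Fm_add[OF A A] Fm_sc[OF A] by blast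
qed

end

theorem lemma2p2:
  fixes sA :: "'k::field \<Rightarrow> 'a::ab_group_add \<Rightarrow> 'a"
    and mA :: "'a \<Rightarrow> 'a \<Rightarrow> 'a"
    and sS :: "'k \<Rightarrow> 's::comm_ring_1 \<Rightarrow> 's"
  assumes vsA: "vector_space sA"
    and bilin1: "\<And>x y z. mA (x + y) z = mA x z + mA y z"
    and bilin2: "\<And>x y z. mA x (y + z) = mA x y + mA x z"
    and bilin3: "\<And>c x y. mA (sA c x) y = sA c (mA x y)"
    and bilin4: "\<And>c x y. mA x (sA c y) = sA c (mA x y)"
    and perfect: "module.span sA {mA x y | x y. True} = UNIV"
    and vsS: "vector_space sS"
    and algS: "\<And>c x y. sS c (x * y) = sS c x * y"
    and psi_iso: "bij_betw (psi sA mA sS) (TCS sA mA sS)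
        (centroid_on (TAS sA sS) (tadd (rels_AS sA sS)) (tscale (rels_AS sA sS)) (mulAS sA sS mA))"
  shows "\<exists>F. fun_space_iso F
           (DerA1 sA mA sS) (TAS sA sS) (tadd (rels_AS sA sS)) (tscale (rels_AS sA sS))
           (Der1S sA mA sS) (OneS sA mA sS) (tadd (rels_CS sA mA sS)) (tscale (rels_CS sA mA sS))"
proof -
  have "L22i sA mA sS"
    by (simp add: L22i_def L22_def L22i_axioms_def vsA bilin1 bilin2 bilin3 bilin4 vsS algS psi_iso)
  then interpret L22i sA mA sS .
  show ?thesis by (rule main)
qed

end
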